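(* Fix $c\neq0$ and $m\in[0,1)$, and let $k(m,V)$ be the constant to which the cnoidal profile $p_{m,V}$ is Virasoro-conjugate (defined for $V\notin(-\frac{m+1}{3},\frac{2m-1}{3})$). Then, as $V\to+\infty$ and as $V\to-\infty$, $$\frac{6\pi^2 k(m,V)}{c}=K(m)^2V-2K(m)\,\zeta(K(m))+O(1/|V|).$$
   Context: $K(m)=\int_0^{\pi/2}(1-m\sin^2\theta)^{-1/2}d\theta$; $\zeta$ is the Weierstrass zeta function with half-periods $K(m)$ and $iK(1-m)$ (i.e. $\zeta'=-\wp$, $\zeta$ odd, $\zeta(z)-1/z\to0$ at $0$, with $\wp$ the Weierstrass elliptic function of that lattice). The cnoidal profile is $p_{m,V}(x)=\frac{cK(m)^2}{3\pi^2}\big[\frac V2-\frac{m+1}3+m\,\mathrm{sn}^2(\frac{K(m)}{\pi}x|m)\big]$ with $\mathrm{sn}$ the Jacobi elliptic sine. A $2\pi$-periodic profile $p$ is Virasoro-conjugate to a constant $k$ if $p=f\cdot k$ for some smooth $f:\mathbb{R}\to\mathbb{R}$ with $f'>0$, $f(x+2\pi)=f(x)+2\pi$, where $(f\cdot q)(f(x))=f'(x)^{-2}[q(x)+\frac c{12}\mathsf{S}[f](x)]$ and $\mathsf{S}[f]=\frac{f'''}{f'}-\frac32(\frac{f''}{f'})^2$. Equivalently, $k(m,V)=\frac{c}{6\pi^2}[K(m)\zeta(a)-\zeta(K(m))a]^2$ with $\wp(a)=V$. *)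

theory Defs
  imports "HOL-Analysis.Analysis"
begin

definition ellK :: "real \<Rightarrow> real" where
  "ellK m = integral {0..pi/2} (\<lambda>\<theta>. 1 / sqrt (1 - m * (sin \<theta>)\<^sup>2))"

text \<open>For m = 0 the
  imaginary half-period K(1) is infinite, and the lattice degenerates to the
  one-dimensional lattice 2 K(0) Z (the limit of the Weierstrass functions as
  the imaginary period tends to infinity).\<close>
definition ell_lattice :: "real \<Rightarrow> complex set" where
  "ell_lattice m =
     (if m = 0 then {of_int a * 2 * complex_of_real (ellK m) | a. True}
      else {of_int a * 2 * complex_of_real (ellK m)
              + of_int b * 2 * \<i> * complex_of_real (ellK (1 - m)) | a b. True})"

definition wp :: "real \<Rightarrow> complex \<Rightarrow> complex" where
  "wp m z = 1 / z\<^sup>2 + (\<Sum>\<^sub>\<infinity>\<omega>\<in>ell_lattice m - {0}. 1 / (z - \<omega>)\<^sup>2 - 1 / \<omega>\<^sup>2)"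

definition wzeta :: "real \<Rightarrow> complex \<Rightarrow> complex" where
  "wzeta m z = 1 / z + (\<Sum>\<^sub>\<infinity>\<omega>\<in>ell_lattice m - {0}. 1 / (z - \<omega>) + 1 / \<omega> + z / \<omega>\<^sup>2)"

text \<open>The branch of the parameter a with wp(a) = V: a lies on the boundary of the
  rectangle with corners 0, K, K + i K', i K' (excluding 0 and the top edge,
  which corresponds to the excluded interval of V).  On this set wp is real and
  injective.  For m = 0 the imaginary half-period is infinite.\<close>
definition im_range :: "real \<Rightarrow> real set" where
  "im_range m = {t. 0 \<le> t \<and> (m = 0 \<or> t \<le> ellK (1 - m))}"

definition a_branch :: "real \<Rightarrow> complex set" where
  "a_branch m =
     {complex_of_real t | t. 0 < t \<and> t \<le> ellK m}
   \<union> {complex_of_real (ellK m) + \<i> * complex_of_real t | t. t \<in> im_range m}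
   \<union> {\<i> * complex_of_real t | t. t \<in> im_range m \<and> 0 < t}"

definition kconst :: "real \<Rightarrow> real \<Rightarrow> real \<Rightarrow> complex" where
  "kconst c m V =
     (let a = (THE a. a \<in> a_branch m \<and> wp m a = complex_of_real V);
          K = complex_of_real (ellK m)
      in complex_of_real (c / (6 * pi\<^sup>2)) * (K * wzeta m a - wzeta m K * a)\<^sup>2)"

end

theory Submission
  imports Defs "HOL-Analysis.Analysis"
begin


lemma frac3a: fixes P Q R :: complex assumes "P \<noteq> 0" "Q \<noteq> 0" "R \<noteq> 0"
  shows "1/P + 1/Q - 2/R = (Q*R + P*R - 2*P*Q)/(P*Q*R)"
  using assms by (simp add: field_simps)
lemma frac3b: fixes P Q R z :: complex assumes "P \<noteq> 0" "Q \<noteq> 0" "R \<noteq> 0"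
  shows "1/P + 1/Q + 2*z/R = (Q*R + P*R + 2*z*P*Q)/(P*Q*R)"
  using assms by (simp add: field_simps)
lemma Tsym_eq: fixes z w :: complex assumes "w \<noteq> 0" "z - w \<noteq> 0" "z + w \<noteq> 0"
  shows "(1/(z-w)^2 - 1/w^2) + (1/(z-(-w))^2 - 1/(-w)^2) = (6*z^2*w^2 - 2*z^4)/((z-w)^2*(z+w)^2*w^2)"
proof -
  have "(1/(z-w)^2 - 1/w^2) + (1/(z-(-w))^2 - 1/(-w)^2) = 1/(z-w)^2 + 1/(z+w)^2 - 2/w^2" by simp
  also have "\<dots> = ((z+w)^2*w^2 + (z-w)^2*w^2 - 2*(z-w)^2*(z+w)^2)/((z-w)^2*(z+w)^2*w^2)"
    by (rule frac3a) (use assms in auto)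
  also have "(z+w)^2*w^2 + (z-w)^2*w^2 - 2*(z-w)^2*(z+w)^2 = 6*z^2*w^2 - 2*z^4" by algebra
  finally show ?thesis .
qed
lemma Zsym_eq: fixes z w :: complex assumes "w \<noteq> 0" "z - w \<noteq> 0" "z + w \<noteq> 0"
  shows "(1/(z-w) + 1/w + z/w^2) + (1/(z-(-w)) + 1/(-w) + z/(-w)^2) = 2*z^3/((z-w)*(z+w)*w^2)"
proof -
  have "(1/(z-w) + 1/w + z/w^2) + (1/(z-(-w)) + 1/(-w) + z/(-w)^2) = 1/(z-w) + 1/(z+w) + 2*z/w^2" by simp
  also have "\<dots> = ((z+w)*w^2 + (z-w)*w^2 + 2*z*(z-w)*(z+w))/((z-w)*(z+w)*w^2)"
    by (rule frac3b) (use assms in auto)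
  also have "(z+w)*w^2 + (z-w)*w^2 + 2*z*(z-w)*(z+w) = 2*z^3" by algebra
  finally show ?thesis .
qed

lemma T_eq: fixes z w :: complex assumes "w \<noteq> 0" "z \<noteq> w"
  shows "1/(z-w)^2 - 1/w^2 = z*(2*w - z)/(w^2*(z-w)^2)"
proof -
  have "z - w \<noteq> 0" using assms by auto
  thus ?thesis using assms by (simp add: field_simps) algebra
qed

lemma Z_eq: fixes z w :: complex assumes "w \<noteq> 0" "z \<noteq> w"
  shows "1/(z-w) + 1/w + z/w^2 = z^2/(w^2*(z-w))"
proof -
  have "z - w \<noteq> 0" using assms by auto
  thus ?thesis using assms by (simp add: field_simps) algebra
qed

lemma Tdiff_eq: fixes s t w :: complex assumes "s - w \<noteq> 0" "t - w \<noteq> 0" 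
  shows "(1/(t-w)^2 - 1/w^2) - (1/(s-w)^2 - 1/w^2) = (s - t)*(s + t - 2*w)/((t-w)^2*(s-w)^2)"
    using assms by (simp add: field_simps) (simp add: power2_eq_square algebra_simps)

lemma far: fixes z w :: complex assumes "cmod z \<le> cmod w / 2"
  shows "cmod (z - w) \<ge> cmod w / 2"
  using norm_triangle_ineq2[of w z] assms by (simp add: norm_minus_commute)

lemma far2: fixes z w :: complex assumes "cmod z \<le> cmod w / 2"
  shows "cmod (z + w) \<ge> cmod w / 2"
  using far[of z "-w"] assms by simp

lemma T_bound: fixes z w :: complex assumes "w \<noteq> 0" "cmod z \<le> cmod w / 2"
  shows "cmod (1/(z-w)^2 - 1/w^2) \<le> 10 * cmod z / cmod w ^ 3"
proof -
  have d: "cmod (z - w) \<ge> cmod w / 2" using far assms by auto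
  have zw: "z \<noteq> w" using d assms by auto
  have n: "cmod (2*w - z) \<le> 5/2 * cmod w"
    using norm_triangle_ineq4[of "2*w" z] assms by (simp add: norm_mult)
  have n2: "cmod z * cmod (2*w - z) \<le> cmod z * (5/2 * cmod w)" by (rule mult_left_mono) (use n in auto)
  have d2: "cmod w^2 * (cmod w / 2)^2 \<le> cmod w^2 * cmod (z-w)^2"
    by (rule mult_left_mono, rule power_mono) (use d in auto)
  have "cmod (1/(z-w)^2 - 1/w^2) = cmod z * cmod (2*w - z) / (cmod w^2 * cmod (z-w)^2)"
    by (simp add: T_eq[OF assms(1) zw] norm_mult norm_divide norm_power)
  also have "\<dots> \<le> cmod z * (5/2 * cmod w) / (cmod w^2 * (cmod w / 2)^2)"
    by (rule frac_le[OF _ n2 _ d2]) (use assms in auto)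
  also have "\<dots> = 10 * cmod z / cmod w ^ 3" using assms by (simp add: field_simps power2_eq_square power3_eq_cube)
  finally show ?thesis .
qed

lemma Tsym_bound: fixes z w :: complex assumes "w \<noteq> 0" "cmod z \<le> cmod w / 2"
  shows "cmod ((1/(z-w)^2 - 1/w^2) + (1/(z-(-w))^2 - 1/(-w)^2)) \<le> 104 * cmod z ^ 2 / cmod w ^ 4"
proof -
  have d1: "cmod (z - w) \<ge> cmod w / 2" using far assms by auto
  have d2: "cmod (z + w) \<ge> cmod w / 2" using far2 assms by auto
  have zw: "z - w \<noteq> 0" "z + w \<noteq> 0" using assms d1 d2 by auto
  have z2: "cmod z ^ 2 \<le> cmod w^2 / 4" using power_mono[OF assms(2), of 2] by (simp add: power_divide)
  have n: "cmod (6*z^2*w^2 - 2*z^4) \<le> 13/2 * cmod z^2 * cmod w^2"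
  proof -
    have "cmod (6*z^2*w^2 - 2*z^4) \<le> 6 * cmod z^2 * cmod w^2 + 2 * cmod z^4"
      using norm_triangle_ineq4[of "6*z^2*w^2" "2*z^4"] by (simp add: norm_mult norm_power)
    moreover have "cmod z^4 \<le> cmod z^2 * (cmod w^2 / 4)"
    proof -
      have "cmod z^4 = cmod z^2 * cmod z^2" by (simp add: power4_eq_xxxx power2_eq_square)
      also have "\<dots> \<le> cmod z^2 * (cmod w^2 / 4)" by (rule mult_left_mono[OF z2]) simp
      finally show ?thesis .
    qed
    ultimately show ?thesis by simp
  qed
  have dd: "(cmod w / 2)^2 * (cmod w / 2)^2 * cmod w^2 \<le> cmod (z-w)^2 * cmod (z+w)^2 * cmod w^2"
    by (intro mult_right_mono mult_mono power_mono) (use d1 d2 in auto)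
  have "cmod ((1/(z-w)^2 - 1/w^2) + (1/(z-(-w))^2 - 1/(-w)^2)) = cmod (6*z^2*w^2 - 2*z^4) / (cmod (z-w)^2 * cmod (z+w)^2 * cmod w^2)"
    unfolding Tsym_eq[OF assms(1) zw] by (simp add: norm_mult norm_divide norm_power)
  also have "\<dots> \<le> (13/2 * cmod z^2 * cmod w^2) / ((cmod w / 2)^2 * (cmod w / 2)^2 * cmod w^2)"
    by (rule frac_le[OF _ n _ dd]) (use assms in auto)
  also have "\<dots> = 104 * cmod z ^ 2 / cmod w ^ 4" using assms by (simp add: field_simps power2_eq_square power4_eq_xxxx)
  finally show ?thesis .
qed


lemma Z_bound: fixes z w :: complex assumes "w \<noteq> 0" "cmod z \<le> cmod w / 2"
  shows "cmod (1/(z-w) + 1/w + z/w^2) \<le> 2 * cmod z^2 / cmod w ^ 3"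
proof -
  have d: "cmod (z - w) \<ge> cmod w / 2" using far assms by auto
  have zw: "z \<noteq> w" using d assms by auto
  have d2: "cmod w^2 * (cmod w / 2) \<le> cmod w^2 * cmod (z-w)"
    by (rule mult_left_mono) (use d in auto)
  have "cmod (1/(z-w) + 1/w + z/w^2) = cmod z^2 / (cmod w^2 * cmod (z-w))"
    unfolding Z_eq[OF assms(1) zw] by (simp add: norm_mult norm_divide norm_power)
  also have "\<dots> \<le> cmod z^2 / (cmod w^2 * (cmod w / 2))"
    by (rule frac_le[OF _ order_refl _ d2]) (use assms in auto)
  also have "\<dots> = 2 * cmod z^2 / cmod w ^ 3" using assms by (simp add: field_simps power2_eq_square power3_eq_cube)
  finally show ?thesis .
qed

lemma Zsym_bound: fixes z w :: complex assumes "w \<noteq> 0" "cmod z \<le> cmod w / 2"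
  shows "cmod ((1/(z-w) + 1/w + z/w^2) + (1/(z-(-w)) + 1/(-w) + z/(-w)^2)) \<le> 8 * cmod z ^ 3 / cmod w ^ 4"
proof -
  have d1: "cmod (z - w) \<ge> cmod w / 2" using far assms by auto
  have d2: "cmod (z + w) \<ge> cmod w / 2" using far2 assms by auto
  have zw: "z - w \<noteq> 0" "z + w \<noteq> 0" using assms d1 d2 by auto
  have dd: "(cmod w / 2) * (cmod w / 2) * cmod w^2 \<le> cmod (z-w) * cmod (z+w) * cmod w^2"
    by (intro mult_right_mono mult_mono) (use d1 d2 in auto)
  have "cmod ((1/(z-w) + 1/w + z/w^2) + (1/(z-(-w)) + 1/(-w) + z/(-w)^2)) = 2 * cmod z^3 / (cmod (z-w) * cmod (z+w) * cmod w^2)"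
    unfolding Zsym_eq[OF assms(1) zw] by (simp add: norm_mult norm_divide norm_power)
  also have "\<dots> \<le> 2 * cmod z^3 / ((cmod w / 2) * (cmod w / 2) * cmod w^2)"
    by (rule frac_le[OF _ order_refl _ dd]) (use assms in auto)
  also have "\<dots> = 8 * cmod z ^ 3 / cmod w ^ 4" using assms by (simp add: field_simps power2_eq_square power4_eq_xxxx)
  finally show ?thesis .
qed

lemma Tdiff_bound: fixes s t w :: complex assumes "w \<noteq> 0" "cmod s \<le> cmod w / 2" "cmod t \<le> cmod w / 2"
  shows "cmod ((1/(t-w)^2 - 1/w^2) - (1/(s-w)^2 - 1/w^2)) \<le> 48 * cmod (t - s) / cmod w ^ 3"
proof -
  have ds: "cmod (s - w) \<ge> cmod w / 2" using far assms by auto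
  have dt: "cmod (t - w) \<ge> cmod w / 2" using far assms by auto
  have nz: "s - w \<noteq> 0" "t - w \<noteq> 0" using ds dt assms by auto
  have n: "cmod (s + t - 2*w) \<le> 3 * cmod w"
  proof -
    have "cmod (s + t - 2*w) \<le> cmod (s + t) + cmod (2*w)" by (rule norm_triangle_ineq4)
    also have "\<dots> \<le> cmod s + cmod t + cmod (2*w)" using norm_triangle_ineq[of s t] by simp
    finally show ?thesis using assms by (simp add: norm_mult)
  qed
  have n2: "cmod (t - s) * cmod (s + t - 2*w) \<le> cmod (t - s) * (3 * cmod w)" by (rule mult_left_mono[OF n]) simp
  have dd: "(cmod w / 2)^2 * (cmod w / 2)^2 \<le> cmod (t-w)^2 * cmod (s-w)^2"
    by (intro mult_mono power_mono) (use ds dt in auto)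
  have "cmod ((1/(t-w)^2 - 1/w^2) - (1/(s-w)^2 - 1/w^2)) = cmod (t - s) * cmod (s + t - 2*w) / (cmod (t-w)^2 * cmod (s-w)^2)"
    unfolding Tdiff_eq[OF nz] by (simp add: norm_mult norm_divide norm_power norm_minus_commute)
  also have "\<dots> \<le> cmod (t - s) * (3 * cmod w) / ((cmod w / 2)^2 * (cmod w / 2)^2)"
    by (rule frac_le[OF _ n2 _ dd]) (use assms in auto)
  also have "\<dots> = 48 * cmod (t - s) / cmod w ^ 3" using assms by (simp add: field_simps power2_eq_square power3_eq_cube)
  finally show ?thesis .
qed


definition Tf :: "complex \<Rightarrow> complex \<Rightarrow> complex" where "Tf z w = 1/(z-w)^2 - 1/w^2"
definition Zf :: "complex \<Rightarrow> complex \<Rightarrow> complex" where "Zf z w = 1/(z-w) + 1/w + z/w^2"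

locale lat =
  fixes L :: "complex set" and \<rho> :: real
  assumes negL: "\<And>w. w \<in> L \<Longrightarrow> -w \<in> L"
  and cnjL: "\<And>w. w \<in> L \<Longrightarrow> cnj w \<in> L"
  and rho_pos: "0 < \<rho>"
  and rho_le: "\<And>w. w \<in> L \<Longrightarrow> \<rho> \<le> cmod w"
  and summ3: "(\<lambda>w. 1 / cmod w ^ 3) summable_on L"
begin

definition "S3 = infsum (\<lambda>w. 1 / cmod w ^ 3) L"
definition "hh z = infsum (Tf z) L"
definition "gg z = infsum (Zf z) L"

lemma S3_nonneg: "0 \<le> S3" unfolding S3_def by (rule infsum_nonneg) auto

lemma w_nz: "w \<in> L \<Longrightarrow> w \<noteq> 0" using rho_le rho_pos by fastforce

lemma neg_img: "uminus ` L = L"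
  using negL by (auto simp: image_iff) (metis minus_minus negL)

lemma cnj_img: "cnj ` L = L"
  using cnjL by (auto simp: image_iff) (metis complex_cnj_cnj cnjL)

lemma maj:
  fixes f :: "complex \<Rightarrow> complex"
  assumes "\<And>w. w \<in> L \<Longrightarrow> cmod (f w) \<le> C / cmod w ^ 3"
  shows "f summable_on L" "cmod (infsum f L) \<le> C * S3"
proof -
  have g: "(\<lambda>w. C * (1 / cmod w ^ 3)) summable_on L" by (rule summable_on_cmult_right[OF summ3])
  have "(\<lambda>w. norm (f w)) summable_on L"
    by (rule summable_on_comparison_test[OF g]) (use assms in auto)
  thus fs: "f summable_on L" by (rule abs_summable_summable)
  have "cmod (infsum f L) \<le> infsum (\<lambda>w. C * (1 / cmod w ^ 3)) L"
    by (rule norm_infsum_le[OF has_sum_infsum[OF fs] has_sum_infsum[OF g]]) (use assms in auto)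
  also have "\<dots> = C * S3" unfolding S3_def by (rule infsum_cmult_right) (use summ3 in auto)
  finally show "cmod (infsum f L) \<le> C * S3" .
qed

lemma small: "cmod z \<le> \<rho>/2 \<Longrightarrow> w \<in> L \<Longrightarrow> cmod z \<le> cmod w / 2"
  using rho_le[of w] by auto

lemma Tf_summ: assumes "cmod z \<le> \<rho>/2" shows "Tf z summable_on L"
  by (rule maj(1)[where C="10 * cmod z"]) (use T_bound small w_nz assms in \<open>auto simp: Tf_def\<close>)

lemma Zf_summ: assumes "cmod z \<le> \<rho>/2" shows "Zf z summable_on L"
  by (rule maj(1)[where C="2 * cmod z^2"]) (use Z_bound small w_nz assms in \<open>auto simp: Zf_def\<close>)

lemma infsum_neg: "infsum (\<lambda>w. f (-w)) L = infsum f L"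
proof -
  have "infsum f L = infsum f (uminus ` L)" by (simp add: neg_img)
  also have "\<dots> = infsum (f \<circ> uminus) L" by (rule infsum_reindex) (auto simp: inj_on_def)
  finally show ?thesis by (simp add: o_def)
qed

lemma summ_neg: "f summable_on L \<Longrightarrow> (\<lambda>w. f (-w)) summable_on L"
proof -
  assume "f summable_on L"
  hence "f summable_on (uminus ` L)" by (simp add: neg_img)
  hence "(f \<circ> uminus) summable_on L" by (subst (asm) summable_on_reindex) (auto simp: inj_on_def)
  thus ?thesis by (simp add: o_def)
qed

lemma hh_bound: assumes "cmod z \<le> \<rho>/2" shows "cmod (hh z) \<le> (52 * S3 / \<rho>) * cmod z ^ 2"
proof -
  have s1: "Tf z summable_on L" by (rule Tf_summ[OF assms])
  have s2: "(\<lambda>w. Tf z (-w)) summable_on L" by (rule summ_neg[OF s1])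
  have "2 * hh z = infsum (Tf z) L + infsum (\<lambda>w. Tf z (-w)) L" unfolding hh_def infsum_neg by simp
  also have "\<dots> = infsum (\<lambda>w. Tf z w + Tf z (-w)) L" by (rule infsum_add[symmetric, OF s1 s2])
  finally have e: "2 * hh z = infsum (\<lambda>w. Tf z w + Tf z (-w)) L" .
  have "cmod (infsum (\<lambda>w. Tf z w + Tf z (-w)) L) \<le> (104 * cmod z^2 / \<rho>) * S3"
  proof (rule maj(2))
    fix w assume w: "w \<in> L"
    have "cmod (Tf z w + Tf z (-w)) \<le> 104 * cmod z ^ 2 / cmod w ^ 4"
      unfolding Tf_def by (rule Tsym_bound) (use w w_nz small assms in auto)
    also have "\<dots> \<le> (104 * cmod z^2 / \<rho>) / cmod w ^ 3"
    proof -
      have p: "cmod w > 0" using w w_nz by auto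
      have "104 * cmod z ^ 2 / cmod w ^ 4 = (104 * cmod z ^ 2 / cmod w) / cmod w ^ 3"
        using p by (simp add: field_simps power3_eq_cube power4_eq_xxxx)
      also have "\<dots> \<le> (104 * cmod z^2 / \<rho>) / cmod w ^ 3"
        by (intro divide_right_mono divide_left_mono) (use p rho_pos rho_le[OF w] in auto)
      finally show ?thesis .
    qed
    finally show "cmod (Tf z w + Tf z (-w)) \<le> (104 * cmod z^2 / \<rho>) / cmod w ^ 3" .
  qed
  hence "2 * cmod (hh z) \<le> (104 * cmod z^2 / \<rho>) * S3" using e by (metis norm_mult norm_numeral)
  moreover have "(104 * cmod z^2 / \<rho>) * S3 = 2 * ((52 * S3 / \<rho>) * cmod z ^ 2)" by (simp add: field_simps)
  ultimately show ?thesis by linarith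
qed

lemma gg_bound: assumes "cmod z \<le> \<rho>/2" shows "cmod (gg z) \<le> (4 * S3 / \<rho>) * cmod z ^ 3"
proof -
  have s1: "Zf z summable_on L" by (rule Zf_summ[OF assms])
  have s2: "(\<lambda>w. Zf z (-w)) summable_on L" by (rule summ_neg[OF s1])
  have "2 * gg z = infsum (Zf z) L + infsum (\<lambda>w. Zf z (-w)) L" unfolding gg_def infsum_neg by simp
  also have "\<dots> = infsum (\<lambda>w. Zf z w + Zf z (-w)) L" by (rule infsum_add[symmetric, OF s1 s2])
  finally have e: "2 * gg z = infsum (\<lambda>w. Zf z w + Zf z (-w)) L" .
  have "cmod (infsum (\<lambda>w. Zf z w + Zf z (-w)) L) \<le> (8 * cmod z^3 / \<rho>) * S3"
  proof (rule maj(2))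
    fix w assume w: "w \<in> L"
    have "cmod (Zf z w + Zf z (-w)) \<le> 8 * cmod z ^ 3 / cmod w ^ 4"
      unfolding Zf_def by (rule Zsym_bound) (use w w_nz small assms in auto)
    also have "\<dots> \<le> (8 * cmod z^3 / \<rho>) / cmod w ^ 3"
    proof -
      have p: "cmod w > 0" using w w_nz by auto
      have "8 * cmod z ^ 3 / cmod w ^ 4 = (8 * cmod z ^ 3 / cmod w) / cmod w ^ 3"
        using p by (simp add: field_simps power3_eq_cube power4_eq_xxxx)
      also have "\<dots> \<le> (8 * cmod z^3 / \<rho>) / cmod w ^ 3"
        by (intro divide_right_mono divide_left_mono) (use p rho_pos rho_le[OF w] in auto)
      finally show ?thesis .
    qed
    finally show "cmod (Zf z w + Zf z (-w)) \<le> (8 * cmod z^3 / \<rho>) / cmod w ^ 3" .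
  qed
  hence "2 * cmod (gg z) \<le> (8 * cmod z^3 / \<rho>) * S3" using e by (metis norm_mult norm_numeral)
  moreover have "(8 * cmod z^3 / \<rho>) * S3 = 2 * ((4 * S3 / \<rho>) * cmod z ^ 3)" by (simp add: field_simps)
  ultimately show ?thesis by linarith
qed

lemma hh_lip: assumes "cmod s \<le> \<rho>/2" "cmod t \<le> \<rho>/2"
  shows "cmod (hh t - hh s) \<le> 48 * S3 * cmod (t - s)"
proof -
  have b: "\<And>w. w \<in> L \<Longrightarrow> cmod (Tf t w - Tf s w) \<le> (48 * cmod (t - s)) / cmod w ^ 3"
    unfolding Tf_def by (rule Tdiff_bound) (use w_nz small assms in auto)
  have s1: "(\<lambda>w. Tf t w - Tf s w) summable_on L" by (rule maj(1)[OF b])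
  have "infsum (\<lambda>w. Tf t w - Tf s w) L + infsum (Tf s) L = infsum (\<lambda>w. (Tf t w - Tf s w) + Tf s w) L"
    by (rule infsum_add[symmetric, OF s1 Tf_summ[OF assms(1)]])
  hence "hh t - hh s = infsum (\<lambda>w. Tf t w - Tf s w) L" unfolding hh_def by (simp add: algebra_simps)
  with maj(2)[OF b] show ?thesis by (simp add: mult_ac)
qed

lemma hh_cnj: "hh (cnj z) = cnj (hh z)"
proof -
  have "cnj (hh z) = infsum (\<lambda>w. cnj (Tf z w)) L" unfolding hh_def by simp
  also have "\<dots> = infsum (\<lambda>w. Tf (cnj z) (cnj w)) L" by (simp add: Tf_def)
  also have "\<dots> = infsum (Tf (cnj z) \<circ> cnj) L" by (simp add: o_def)
  also have "\<dots> = infsum (Tf (cnj z)) (cnj ` L)" by (rule infsum_reindex[symmetric]) (auto simp: inj_on_def)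
  also have "\<dots> = hh (cnj z)" by (simp add: cnj_img hh_def)
  finally show ?thesis by simp
qed

lemma hh_neg: "hh (-z) = hh z"
proof -
  have "hh (-z) = infsum (\<lambda>w. Tf z (-w)) L" unfolding hh_def Tf_def
    by (rule infsum_cong) (simp add: power2_eq_square algebra_simps)
  also have "\<dots> = hh z" unfolding hh_def by (rule infsum_neg)
  finally show ?thesis .
qed

lemma hh_real: "Im (hh (complex_of_real t)) = 0"
  using hh_cnj[of "complex_of_real t"] by (metis Reals_cnj_iff Reals_of_real complex_is_Real_iff)

lemma hh_imag: "Im (hh (\<i> * complex_of_real t)) = 0"
proof -
  have "cnj (hh (\<i> * complex_of_real t)) = hh (\<i> * complex_of_real t)"
    using hh_cnj[of "\<i> * complex_of_real t"] hh_neg[of "\<i> * complex_of_real t"] by simp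
  thus ?thesis by (metis Reals_cnj_iff complex_is_Real_iff)
qed

end


lemma inj_real:
  fixes s t r Lp :: real
  assumes "0 < s" "s \<le> r" "0 < t" "t \<le> r" "Lp * r^3 \<le> 1/2"
    and "\<bar>1/s^2 - 1/t^2\<bar> \<le> Lp * \<bar>t - s\<bar>"
  shows "s = t"
proof (rule ccontr)
  assume ne: "s \<noteq> t"
  have r: "r > 0" using assms by auto
  have e: "1/s^2 - 1/t^2 = (t-s) * (1/(s * t^2) + 1/(s^2 * t))"
    using assms(1,3) by (simp add: field_simps power2_eq_square)
  have tt: "t * t \<le> r * r" using mult_mono[OF assms(4) assms(4)] assms(3) r by simp
  have ss: "s * s \<le> r * r" using mult_mono[OF assms(2) assms(2)] assms(1) r by simp
  have a1: "s * (t * t) \<le> r * (r * r)" using mult_mono[OF assms(2) tt] assms(3) r by simp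
  have a2: "(s * s) * t \<le> (r * r) * r" using mult_mono[OF ss assms(4)] assms(3) r by simp
  have a1: "s * t^2 \<le> r^3" using a1 by (simp add: power3_eq_cube power2_eq_square)
  have a2: "s^2 * t \<le> r^3" using a2 by (simp add: power3_eq_cube power2_eq_square)
  have b1: "1/r^3 \<le> 1/(s * t^2)" by (rule divide_left_mono[OF a1]) (use assms(1-5) r in auto)
  have b2: "1/r^3 \<le> 1/(s^2 * t)" by (rule divide_left_mono[OF a2]) (use assms(1-5) r in auto)
  have pos: "0 < 1/(s * t^2) + 1/(s^2 * t)" using assms(1,3) by (simp add: add_pos_pos)
  have "\<bar>t - s\<bar> * (2/r^3) \<le> \<bar>t - s\<bar> * (1/(s * t^2) + 1/(s^2 * t))"
    by (rule mult_left_mono) (use b1 b2 in auto)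
  also have "\<dots> = \<bar>1/s^2 - 1/t^2\<bar>" unfolding e using pos by (simp add: abs_mult)
  also have "\<dots> \<le> Lp * \<bar>t - s\<bar>" by fact
  finally have "\<bar>t - s\<bar> * (2/r^3) \<le> \<bar>t - s\<bar> * Lp" by (simp add: mult_ac)
  moreover have "0 < \<bar>t - s\<bar>" using ne by simp
  ultimately have "2/r^3 \<le> Lp" by (metis mult_le_cancel_left_pos)
  hence "2 \<le> Lp * r^3" using r by (simp add: field_simps)
  thus False using assms(5) by simp
qed

context lat begin

definition "wpL z = 1/z^2 + hh z"
definition "zL z = 1/z + gg z"

abbreviation "H \<equiv> 52 * S3 / \<rho>"
abbreviation "G \<equiv> 4 * S3 / \<rho>"
abbreviation "Lp \<equiv> 48 * S3"

lemma H_nonneg: "0 \<le> H" using S3_nonneg rho_pos by auto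

lemma est:
  fixes Kc Zc a :: complex and r :: real
  assumes a0: "a \<noteq> 0" and ar: "cmod a \<le> r" and r1: "r \<le> \<rho>/2" "r \<le> 1" and r4: "H * r^4 \<le> 1/2"
  shows "cmod ((Kc * zL a - Zc * a)^2 - (Kc^2 * wpL a - 2*Kc*Zc))
           \<le> (2 * cmod Kc^2 * G + (cmod Kc * G + cmod Zc)^2 + cmod Kc^2 * H) * cmod a^2"
    and "cmod (wpL a) * cmod a^2 \<le> 3/2"
proof -
  have aa: "cmod a \<le> \<rho>/2" using ar r1 by auto
  have a1: "cmod a \<le> 1" using ar r1 by auto
  have hb: "cmod (hh a) \<le> H * cmod a^2" using hh_bound[OF aa] .
  have gb: "cmod (gg a) \<le> G * cmod a^3" using gg_bound[OF aa] .
  have Hn: "0 \<le> H" by (rule H_nonneg)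
  have Gn: "0 \<le> G" using S3_nonneg rho_pos by auto
  define E where "E = Kc * gg a - Zc * a"
  have id: "(Kc * zL a - Zc * a)^2 - (Kc^2 * wpL a - 2*Kc*Zc) = 2 * Kc^2 * gg a / a + E^2 - Kc^2 * hh a"
    unfolding zL_def wpL_def E_def using a0 by (simp add: field_simps power2_eq_square)
  have t1: "cmod (2 * Kc^2 * gg a / a) \<le> 2 * cmod Kc^2 * G * cmod a^2"
  proof -
    have "cmod (2 * Kc^2 * gg a / a) = 2 * cmod Kc^2 * cmod (gg a) / cmod a" by (simp add: norm_mult norm_divide norm_power)
    also have "\<dots> \<le> 2 * cmod Kc^2 * (G * cmod a^3) / cmod a"
      by (intro divide_right_mono mult_left_mono gb) auto
    also have "\<dots> = 2 * cmod Kc^2 * G * cmod a^2" using a0 by (simp add: power2_eq_square power3_eq_cube)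
    finally show ?thesis .
  qed
  have Eb: "cmod E \<le> (cmod Kc * G + cmod Zc) * cmod a"
  proof -
    have "cmod E \<le> cmod Kc * cmod (gg a) + cmod Zc * cmod a" unfolding E_def
      using norm_triangle_ineq4[of "Kc * gg a" "Zc * a"] by (simp add: norm_mult)
    also have "\<dots> \<le> cmod Kc * (G * cmod a^3) + cmod Zc * cmod a" by (intro add_mono mult_left_mono gb) auto
    also have "\<dots> \<le> cmod Kc * (G * cmod a) + cmod Zc * cmod a"
    proof -
      have "cmod a * (cmod a * cmod a) \<le> cmod a * 1" by (rule mult_left_mono[OF mult_le_one]) (use a1 in auto)
      hence "cmod a^3 \<le> cmod a" by (simp add: power3_eq_cube mult_ac)
      hence "G * cmod a^3 \<le> G * cmod a" using Gn by (rule mult_left_mono)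
      hence "cmod Kc * (G * cmod a^3) \<le> cmod Kc * (G * cmod a)" by (rule mult_left_mono) simp
      thus ?thesis by simp
    qed
    finally show ?thesis by (simp add: algebra_simps)
  qed
  have t2: "cmod (E^2) \<le> (cmod Kc * G + cmod Zc)^2 * cmod a^2"
  proof -
    have "cmod (E^2) = cmod E ^ 2" by (simp add: norm_power)
    also have "\<dots> \<le> ((cmod Kc * G + cmod Zc) * cmod a)^2" by (rule power_mono[OF Eb]) simp
    finally show ?thesis by (simp add: power_mult_distrib)
  qed
  have t3: "cmod (Kc^2 * hh a) \<le> cmod Kc^2 * H * cmod a^2"
    using mult_left_mono[OF hb, of "cmod Kc^2"] by (simp add: norm_mult norm_power mult_ac)
  have "cmod (2 * Kc^2 * gg a / a + E^2 - Kc^2 * hh a) \<le> cmod (2 * Kc^2 * gg a / a) + cmod (E^2) + cmod (Kc^2 * hh a)"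
    using norm_triangle_ineq4[of "2 * Kc^2 * gg a / a + E^2" "Kc^2 * hh a"] norm_triangle_ineq[of "2 * Kc^2 * gg a / a" "E^2"] by linarith
  also have "\<dots> \<le> 2 * cmod Kc^2 * G * cmod a^2 + (cmod Kc * G + cmod Zc)^2 * cmod a^2 + cmod Kc^2 * H * cmod a^2"
    using t1 t2 t3 by linarith
  finally show "cmod ((Kc * zL a - Zc * a)^2 - (Kc^2 * wpL a - 2*Kc*Zc))
           \<le> (2 * cmod Kc^2 * G + (cmod Kc * G + cmod Zc)^2 + cmod Kc^2 * H) * cmod a^2"
    unfolding id by (simp add: algebra_simps)
  have "cmod (wpL a) \<le> 1 / cmod a^2 + H * cmod a^2"
    unfolding wpL_def using norm_triangle_ineq[of "1/a^2" "hh a"] hb by (simp add: norm_divide norm_power)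
  hence "cmod (wpL a) * cmod a^2 \<le> (1 / cmod a^2 + H * cmod a^2) * cmod a^2" by (rule mult_right_mono) simp
  also have "\<dots> = 1 + H * cmod a^4" using a0 by (simp add: field_simps power2_eq_square power4_eq_xxxx)
  also have "\<dots> \<le> 1 + H * r^4" using Hn ar by (intro add_mono mult_left_mono power_mono) auto
  finally show "cmod (wpL a) * cmod a^2 \<le> 3/2" using r4 by simp
qed

end


context lat begin

lemma Lp_nonneg: "0 \<le> Lp" using S3_nonneg by simp

lemma hh_cont: "continuous_on (cball 0 (\<rho>/2)) hh"
proof (rule lipschitz_on_continuous_on)
  show "Lp-lipschitz_on (cball 0 (\<rho>/2)) hh"
  proof (rule lipschitz_onI)
    fix x y :: complex assume "x \<in> cball 0 (\<rho>/2)" "y \<in> cball 0 (\<rho>/2)"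
    thus "dist (hh x) (hh y) \<le> Lp * dist x y" using hh_lip[of y x] by (simp add: dist_norm)
  qed (rule Lp_nonneg)
qed

definition "fr t = 1/t^2 + Re (hh (complex_of_real t))"
definition "fi t = -1/t^2 + Re (hh (\<i> * complex_of_real t))"

lemma wpL_real: "t \<noteq> 0 \<Longrightarrow> wpL (complex_of_real t) = complex_of_real (fr t)"
  unfolding wpL_def fr_def by (rule complex_eqI) (simp_all add: hh_real)

lemma wpL_imag: "t \<noteq> 0 \<Longrightarrow> wpL (\<i> * complex_of_real t) = complex_of_real (fi t)"
proof -
  have "1 / (\<i> * complex_of_real t)^2 = complex_of_real (-1/t^2)" by (simp add: power_mult_distrib)
  thus "t \<noteq> 0 \<Longrightarrow> wpL (\<i> * complex_of_real t) = complex_of_real (fi t)"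
    unfolding wpL_def fi_def by (intro complex_eqI) (simp_all add: hh_imag)
qed

lemma Re_hh_bound: "cmod z \<le> \<rho>/2 \<Longrightarrow> \<bar>Re (hh z)\<bar> \<le> H * cmod z ^ 2"
  using hh_bound abs_Re_le_cmod order_trans by blast

lemma fr_cont: assumes "0 < e" "r \<le> \<rho>/2" shows "continuous_on {e..r} fr"
proof -
  have c1: "continuous_on {e..r} (\<lambda>t. hh (complex_of_real t))"
    by (rule continuous_on_compose2[OF hh_cont]) (use assms in \<open>auto intro!: continuous_intros\<close>)
  have c2: "continuous_on {e..r} (\<lambda>t::real. 1/t^2)"
    by (intro continuous_intros) (use assms in auto)
  show ?thesis unfolding fr_def
    by (intro continuous_on_add c2 continuous_on_Re c1)
qed

lemma fi_cont: assumes "0 < e" "r \<le> \<rho>/2" shows "continuous_on {e..r} fi"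
proof -
  have c1: "continuous_on {e..r} (\<lambda>t. hh (\<i> * complex_of_real t))"
    by (rule continuous_on_compose2[OF hh_cont]) (use assms in \<open>auto intro!: continuous_intros simp: norm_mult\<close>)
  have c2: "continuous_on {e..r} (\<lambda>t::real. -1/t^2)"
    by (intro continuous_intros) (use assms in auto)
  show ?thesis unfolding fi_def
    by (intro continuous_on_add c2 continuous_on_Re c1)
qed

end


context lat begin

theorem asym:
  fixes B :: "complex set" and r0 :: real and Kc Zc :: complex
  assumes r0: "0 < r0"
    and B_real: "\<And>t. 0 < t \<Longrightarrow> t \<le> r0 \<Longrightarrow> complex_of_real t \<in> B"
    and B_imag: "\<And>t. 0 < t \<Longrightarrow> t \<le> r0 \<Longrightarrow> \<i> * complex_of_real t \<in> B"
    and B_small: "\<And>z. z \<in> B \<Longrightarrow> cmod z < r0 \<Longrightarrow> \<exists>t>0. z = complex_of_real t \<or> z = \<i> * complex_of_real t"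
    and B_far: "\<And>r. 0 < r \<Longrightarrow> \<exists>M. \<forall>z\<in>B. r \<le> cmod z \<longrightarrow> cmod (hh z) \<le> M"
  shows "\<exists>C R. R > 0 \<and> (\<forall>V::real. R \<le> \<bar>V\<bar> \<longrightarrow>
     cmod ((Kc * zL (THE a. a \<in> B \<and> wpL a = complex_of_real V) - Zc * (THE a. a \<in> B \<and> wpL a = complex_of_real V))^2
            - (Kc^2 * complex_of_real V - 2*Kc*Zc)) \<le> C / \<bar>V\<bar>)"
proof -
  have Hn: "0 \<le> H" by (rule H_nonneg)
  have Ln: "0 \<le> Lp" by (rule Lp_nonneg)
  define r where "r = min (min (\<rho>/2) r0) (min 1 (min (1/(2*(H+1))) (1/(2*(Lp+1)))))"
  have h2: "0 < 1/(2*(H+1))" "0 < 1/(2*(Lp+1))" using Hn Ln by (auto intro!: divide_pos_pos)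
  have r_pos: "0 < r" unfolding r_def using rho_pos r0 h2 by (simp only: min_less_iff_conj) simp
  have r_rho: "r \<le> \<rho>/2" and r_r0: "r \<le> r0" and r1: "r \<le> 1" unfolding r_def by auto
  have rH: "H * r \<le> 1/2"
  proof -
    have "r \<le> 1/(2*(H+1))" unfolding r_def by auto
    hence "(H+1) * r \<le> (H+1) * (1/(2*(H+1)))" using Hn by (intro mult_left_mono) auto
    also have "\<dots> = 1/2" proof - have "H + 1 \<noteq> 0" using Hn by linarith thus ?thesis by simp qed
    finally show ?thesis using r_pos by (simp add: algebra_simps)
  qed
  have rL: "Lp * r \<le> 1/2"
  proof -
    have "r \<le> 1/(2*(Lp+1))" unfolding r_def by auto
    hence "(Lp+1) * r \<le> (Lp+1) * (1/(2*(Lp+1)))" using Ln by (intro mult_left_mono) auto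
    also have "\<dots> = 1/2" proof - have "Lp + 1 \<noteq> 0" using Ln by linarith thus ?thesis by simp qed
    finally show ?thesis using r_pos by (simp add: algebra_simps)
  qed
  have rpow: "r^n \<le> r" if "n \<ge> 1" for n :: nat
    using power_decreasing[of 1 n r] that r_pos r1 by simp
  have r4: "H * r^4 \<le> 1/2" using mult_left_mono[OF rpow[of 4] Hn] rH by simp
  have r3: "Lp * r^3 \<le> 1/2" using mult_left_mono[OF rpow[of 3] Ln] rL by simp
  obtain M where M: "\<forall>z\<in>B. r \<le> cmod z \<longrightarrow> cmod (hh z) \<le> M" using B_far[OF r_pos] by blast
  define R where "R = 1/r^2 + \<bar>M\<bar> + H + 1"
  have R_pos: "0 < R"
  proof -
    have "0 \<le> 1/r^2" by simp
    thus ?thesis unfolding R_def using Hn abs_ge_zero[of M] by linarith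
  qed
  have R_ge: "1/r^2 + \<bar>M\<bar> + H + 1 \<le> R" unfolding R_def by simp
  have F1: "cmod (wpL z) < R" if z: "z \<in> B" "r \<le> cmod z" for z
  proof -
    have "cmod (wpL z) \<le> cmod (1/z^2) + cmod (hh z)" unfolding wpL_def by (rule norm_triangle_ineq)
    also have "cmod (1/z^2) \<le> 1/r^2"
    proof -
      have h: "r^2 \<le> cmod z^2" using z r_pos by (intro power_mono) auto
      have "1/cmod z^2 \<le> 1/r^2" by (rule divide_left_mono[OF h]) (use r_pos z in \<open>auto intro!: mult_pos_pos\<close>)
      thus ?thesis by (simp add: norm_divide norm_power)
    qed
    hence "cmod (1/z^2) + cmod (hh z) \<le> 1/r^2 + M" using M z by force
    finally show ?thesis using R_ge Hn by linarith
  qed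
  have fr_pos: "fr t > 0" if "0 < t" "t \<le> r" for t
  proof -
    have "\<bar>Re (hh (complex_of_real t))\<bar> \<le> H * t^2" using Re_hh_bound[of "complex_of_real t"] that r_rho by simp
    moreover have "H * t^2 < 1/t^2"
    proof -
      have a: "H * t^4 \<le> H * r^4" using that Hn by (intro mult_left_mono power_mono) auto
      have b: "H * t^2 * t^2 = H * t^4" by (simp only: power4_eq_xxxx power2_eq_square mult_ac)
      have c: "H * t^2 * t^2 < 1" using a b r4 by linarith
      have "0 < t^2" using that by simp
      thus ?thesis using c by (simp only: pos_less_divide_eq)
    qed
    ultimately show ?thesis unfolding fr_def by linarith
  qed
  have fi_neg: "fi t < 0" if "0 < t" "t \<le> r" for t
  proof -
    have "\<bar>Re (hh (\<i> * complex_of_real t))\<bar> \<le> H * t^2" using Re_hh_bound[of "\<i> * complex_of_real t"] that r_rho by (simp add: norm_mult)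
    moreover have "H * t^2 < 1/t^2"
    proof -
      have a: "H * t^4 \<le> H * r^4" using that Hn by (intro mult_left_mono power_mono) auto
      have b: "H * t^2 * t^2 = H * t^4" by (simp only: power4_eq_xxxx power2_eq_square mult_ac)
      have c: "H * t^2 * t^2 < 1" using a b r4 by linarith
      have "0 < t^2" using that by simp
      thus ?thesis using c by (simp only: pos_less_divide_eq)
    qed
    ultimately show ?thesis unfolding fi_def by linarith
  qed
  have fr_inj: "s = t" if "0 < s" "s \<le> r" "0 < t" "t \<le> r" "fr s = fr t" for s t
  proof (rule inj_real[OF that(1-4) r3])
    have "1/s^2 - 1/t^2 = Re (hh (complex_of_real t) - hh (complex_of_real s))" using that(5) unfolding fr_def by simp
    also have "\<bar>\<dots>\<bar> \<le> cmod (hh (complex_of_real t) - hh (complex_of_real s))" by (rule abs_Re_le_cmod)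
    also have "\<dots> \<le> Lp * cmod (complex_of_real t - complex_of_real s)" using hh_lip[of "complex_of_real s" "complex_of_real t"] that r_rho by simp
    finally show "\<bar>1/s^2 - 1/t^2\<bar> \<le> Lp * \<bar>t - s\<bar>" by (simp flip: of_real_diff)
  qed
  have fi_inj: "s = t" if "0 < s" "s \<le> r" "0 < t" "t \<le> r" "fi s = fi t" for s t
  proof (rule inj_real[OF that(1-4) r3])
    have "1/t^2 - 1/s^2 = Re (hh (\<i> * complex_of_real t) - hh (\<i> * complex_of_real s))" using that(5) unfolding fi_def by simp
    also have "\<bar>\<dots>\<bar> \<le> cmod (hh (\<i> * complex_of_real t) - hh (\<i> * complex_of_real s))" by (rule abs_Re_le_cmod)
    also have "\<dots> \<le> Lp * cmod (\<i> * complex_of_real t - \<i> * complex_of_real s)" using hh_lip[of "\<i> * complex_of_real s" "\<i> * complex_of_real t"] that r_rho by (simp add: norm_mult)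
    also have "cmod (\<i> * complex_of_real t - \<i> * complex_of_real s) = \<bar>t - s\<bar>"
      by (simp add: norm_mult flip: right_diff_distrib of_real_diff)
    finally show "\<bar>1/s^2 - 1/t^2\<bar> \<le> Lp * \<bar>t - s\<bar>" by (simp add: abs_minus_commute)
  qed
  have "r^2 \<le> 1" using rpow[of 2] r1 by linarith
  hence "H * r^2 \<le> H * 1" using Hn by (rule mult_left_mono)
  hence Hr2: "H * r^2 \<le> H" by (simp only: mult_1_right)
  have ex_pos: "\<exists>t. 0 < t \<and> t \<le> r \<and> fr t = V" if V: "R \<le> V" for V
  proof -
    have Mn: "0 \<le> \<bar>M\<bar>" by simp
    have rr: "0 \<le> 1/r^2" by simp
    have V1: "1 \<le> V" and VH: "H + 1 \<le> V" and Vr: "1/r^2 \<le> V" using V R_ge Hn Mn rr by linarith+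
    define e where "e = 1/(V+1)"
    have Vp: "0 < V + 1" using V1 by simp
    have e_pos: "0 < e" unfolding e_def using Vp by simp
    have "1 \<le> r^2 * V" using Vr r_pos by (simp add: divide_le_eq mult.commute)
    moreover have "r^2 * V \<le> r * V" using rpow[of 2] V1 by (intro mult_right_mono) auto
    ultimately have "1 \<le> r * (V + 1)" using r_pos by (simp add: algebra_simps)
    hence e_le: "e \<le> r" unfolding e_def using Vp by (simp add: divide_le_eq mult.commute)
    have e1: "e \<le> 1" using e_le r1 by simp
    have fr_r: "fr r \<le> V"
    proof -
      have "Re (hh (complex_of_real r)) \<le> H * r^2" using Re_hh_bound[of "complex_of_real r"] r_rho r_pos by simp
      thus ?thesis unfolding fr_def using Hr2 R_ge V Mn by linarith
    qed
    have fr_e: "V \<le> fr e"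
    proof -
      have "- (H * e^2) \<le> Re (hh (complex_of_real e))" using Re_hh_bound[of "complex_of_real e"] r_rho e_pos e_le by simp
      moreover have "H * e^2 \<le> H"
      proof -
        have "e^2 \<le> 1" using e1 e_pos by (simp add: power_le_one)
        hence "H * e^2 \<le> H * 1" using Hn by (rule mult_left_mono)
        thus ?thesis by (simp only: mult_1_right)
      qed
      moreover have "1/e^2 = (V+1)^2" unfolding e_def by (simp add: power_one_over)
      moreover have "V \<le> V * V" using mult_left_mono[of 1 V V] V1 by simp
      moreover have "(V+1)^2 = V*V + 2*V + 1" by (simp add: power2_eq_square algebra_simps)
      ultimately show ?thesis unfolding fr_def using VH V1 by linarith
    qed
    obtain x where "e \<le> x" "x \<le> r" "fr x = V"
      using IVT2'[of fr r V e, OF fr_r fr_e e_le fr_cont[OF e_pos r_rho]] by blast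
    thus ?thesis using e_pos by (intro exI[of _ x]) auto
  qed
  have ex_neg: "\<exists>t. 0 < t \<and> t \<le> r \<and> fi t = V" if V: "R \<le> - V" for V
  proof -
    define W where "W = - V"
    have Mn: "0 \<le> \<bar>M\<bar>" by simp
    have rr: "0 \<le> 1/r^2" by simp
    have V1: "1 \<le> W" and VH: "H + 1 \<le> W" and Vr: "1/r^2 \<le> W" using V R_ge Hn Mn rr unfolding W_def by linarith+
    define e where "e = 1/(W+1)"
    have Vp: "0 < W + 1" using V1 by simp
    have e_pos: "0 < e" unfolding e_def using Vp by simp
    have "1 \<le> r^2 * W" using Vr r_pos by (simp add: divide_le_eq mult.commute)
    moreover have "r^2 * W \<le> r * W" using rpow[of 2] V1 by (intro mult_right_mono) auto
    ultimately have "1 \<le> r * (W + 1)" using r_pos by (simp add: algebra_simps)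
    hence e_le: "e \<le> r" unfolding e_def using Vp by (simp add: divide_le_eq mult.commute)
    have e1: "e \<le> 1" using e_le r1 by simp
    have fi_r: "V \<le> fi r"
    proof -
      have "- (H * r^2) \<le> Re (hh (\<i> * complex_of_real r))" using Re_hh_bound[of "\<i> * complex_of_real r"] r_rho r_pos by (simp add: norm_mult)
      thus ?thesis unfolding fi_def W_def using Hr2 R_ge V Mn by linarith
    qed
    have fi_e: "fi e \<le> V"
    proof -
      have "Re (hh (\<i> * complex_of_real e)) \<le> H * e^2" using Re_hh_bound[of "\<i> * complex_of_real e"] r_rho e_pos e_le by (simp add: norm_mult)
      moreover have "H * e^2 \<le> H"
      proof -
        have "e^2 \<le> 1" using e1 e_pos by (simp add: power_le_one)
        hence "H * e^2 \<le> H * 1" using Hn by (rule mult_left_mono)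
        thus ?thesis by (simp only: mult_1_right)
      qed
      moreover have "1/e^2 = (W+1)^2" unfolding e_def by (simp add: power_one_over)
      moreover have "W \<le> W * W" using mult_left_mono[of 1 W W] V1 by simp
      moreover have "(W+1)^2 = W*W + 2*W + 1" by (simp add: power2_eq_square algebra_simps)
      ultimately show ?thesis unfolding fi_def using VH V1 W_def by linarith
    qed
    obtain x where "e \<le> x" "x \<le> r" "fi x = V"
      using IVT'[of fi e V r, OF fi_e fi_r e_le fi_cont[OF e_pos r_rho]] by blast
    thus ?thesis using e_pos by (intro exI[of _ x]) auto
  qed
  have char: "(0 < V \<and> (\<exists>t. 0 < t \<and> t \<le> r \<and> a = complex_of_real t \<and> fr t = V)) \<or>
              (V < 0 \<and> (\<exists>t. 0 < t \<and> t \<le> r \<and> a = \<i> * complex_of_real t \<and> fi t = V))"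
    if a: "a \<in> B" "wpL a = complex_of_real V" "R \<le> \<bar>V\<bar>" for a V
  proof -
    have ar: "cmod a < r"
    proof (rule ccontr)
      assume "\<not> cmod a < r"
      hence "cmod (wpL a) < R" using F1[OF a(1)] by simp
      thus False using a by simp
    qed
    obtain t where t: "t > 0" "a = complex_of_real t \<or> a = \<i> * complex_of_real t"
      using B_small[OF a(1)] ar r_r0 by force
    have tr: "t \<le> r" using t ar by (auto simp: norm_mult)
    from t(2) show ?thesis
    proof
      assume at: "a = complex_of_real t"
      hence "fr t = V" using a(2) wpL_real[of t] t(1) by simp
      thus ?thesis using fr_pos[OF t(1) tr] at t(1) tr by auto
    next
      assume at: "a = \<i> * complex_of_real t"
      hence "fi t = V" using a(2) wpL_imag[of t] t(1) by simp
      thus ?thesis using fi_neg[OF t(1) tr] at t(1) tr by auto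
    qed
  qed
  have uniq: "\<exists>!a. a \<in> B \<and> wpL a = complex_of_real V" if V: "R \<le> \<bar>V\<bar>" for V
  proof (rule ex_ex1I)
    show "\<exists>a. a \<in> B \<and> wpL a = complex_of_real V"
    proof (cases "0 \<le> V")
      case True
      then obtain t where t: "0 < t" "t \<le> r" "fr t = V" using ex_pos[of V] V by auto
      thus ?thesis using B_real[of t] r_r0 wpL_real[of t] by (intro exI[of _ "complex_of_real t"]) auto
    next
      case False
      then obtain t where t: "0 < t" "t \<le> r" "fi t = V" using ex_neg[of V] V by auto
      thus ?thesis using B_imag[of t] r_r0 wpL_imag[of t] by (intro exI[of _ "\<i> * complex_of_real t"]) auto
    qed
  next
    fix a b assume a: "a \<in> B \<and> wpL a = complex_of_real V" and b: "b \<in> B \<and> wpL b = complex_of_real V"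
    show "a = b"
      using char[of a V] char[of b V] a b V fr_inj fi_inj by (smt (verit))
  qed
  define C1 where "C1 = 2 * cmod Kc^2 * G + (cmod Kc * G + cmod Zc)^2 + cmod Kc^2 * H"
  have C1n: "0 \<le> C1" unfolding C1_def using Hn S3_nonneg rho_pos by simp
  show ?thesis
  proof (rule exI[of _ "3/2 * C1"], rule exI[of _ R], intro conjI allI impI)
    show "0 < R" by (rule R_pos)
    fix V :: real assume V: "R \<le> \<bar>V\<bar>"
    define a where "a = (THE a. a \<in> B \<and> wpL a = complex_of_real V)"
    have a: "a \<in> B \<and> wpL a = complex_of_real V" unfolding a_def by (rule theI'[OF uniq[OF V]])
    have a0: "a \<noteq> 0" and ar: "cmod a \<le> r" using char[of a V] a V by (auto simp: norm_mult)
    have e1: "cmod ((Kc * zL a - Zc * a)^2 - (Kc^2 * wpL a - 2*Kc*Zc)) \<le> C1 * cmod a^2"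
      unfolding C1_def by (rule est(1)[OF a0 ar r_rho r1 r4])
    have e2: "cmod (wpL a) * cmod a^2 \<le> 3/2" by (rule est(2)[OF a0 ar r_rho r1 r4])
    have Vp: "0 < \<bar>V\<bar>" using V R_pos by linarith
    have "\<bar>V\<bar> * cmod a^2 \<le> 3/2" using e2 a by simp
    hence ca: "cmod a^2 \<le> (3/2) / \<bar>V\<bar>" using Vp by (simp add: le_divide_eq mult.commute)
    have "cmod ((Kc * zL a - Zc * a)^2 - (Kc^2 * complex_of_real V - 2*Kc*Zc)) \<le> C1 * cmod a^2" using e1 a by simp
    also have "\<dots> \<le> C1 * ((3/2) / \<bar>V\<bar>)" by (rule mult_left_mono[OF ca C1n])
    finally show "cmod ((Kc * zL a - Zc * a)^2 - (Kc^2 * complex_of_real V - 2*Kc*Zc)) \<le> 3/2 * C1 / \<bar>V\<bar>" by simp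
  qed
qed

end


definition qq :: "int \<Rightarrow> real" where "qq n = 1 / (1 + \<bar>real_of_int n\<bar>) powr (3/2)"

lemma qq_pos: "0 < qq n" unfolding qq_def by (simp add: add_pos_nonneg)

lemma qq_abs[simp]: "\<bar>qq n\<bar> = qq n" using qq_pos[of n] by simp

lemma qq_nat_summable: "(\<lambda>n::nat. 1 / (1 + real n) powr (3/2)) summable_on UNIV"
proof (rule summable_nonneg_imp_summable_on)
  have "summable (\<lambda>n::nat. real n powr (-3/2))" by (simp add: summable_real_powr_iff)
  hence "summable (\<lambda>n::nat. real (Suc n) powr (-3/2))" by (subst summable_Suc_iff)
  thus "summable (\<lambda>n::nat. 1 / (1 + real n) powr (3/2))"
    by (simp add: powr_minus_divide add.commute)
qed simp

lemma qq_summable: "qq summable_on UNIV"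
proof -
  have u: "(UNIV :: int set) = int ` UNIV \<union> (\<lambda>n. - int n) ` UNIV"
  proof -
    have "x \<in> int ` UNIV \<union> (\<lambda>n. - int n) ` UNIV" for x :: int
    proof (cases "0 \<le> x")
      case True thus ?thesis by (metis UnI1 nonneg_int_cases rangeI)
    next
      case False hence "x = - int (nat (-x))" by simp
      thus ?thesis by blast
    qed
    thus ?thesis by blast
  qed
  have s1: "qq summable_on (int ` UNIV)"
    by (subst summable_on_reindex) (auto simp: inj_on_def o_def qq_def qq_nat_summable)
  have s2: "qq summable_on ((\<lambda>n. - int n) ` UNIV)"
    by (subst summable_on_reindex) (auto simp: inj_on_def o_def qq_def qq_nat_summable)
  show ?thesis unfolding u by (rule summable_on_union[OF s1 s2])
qed

lemma qq2_summable: "(\<lambda>p::int\<times>int. qq (fst p) * qq (snd p)) summable_on UNIV"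
proof -
  have "(\<lambda>p::int\<times>int. norm (qq (fst p) * qq (snd p))) summable_on Sigma UNIV (\<lambda>_. UNIV)"
  proof (rule iffD2[OF Infinite_Sum.abs_summable_on_Sigma_iff], intro conjI ballI)
    fix x :: int
    show "(\<lambda>y. norm (qq (fst (x, y)) * qq (snd (x, y)))) summable_on UNIV"
      using summable_on_cmult_right[OF qq_summable, of "qq x"] qq_pos by (simp add: abs_mult)
  next
    have E: "infsum (\<lambda>y. norm (qq (fst (x, y)) * qq (snd (x, y)))) UNIV = qq x * infsum qq UNIV" for x
    proof -
      have "infsum (\<lambda>y. norm (qq (fst (x, y)) * qq (snd (x, y)))) UNIV = infsum (\<lambda>y. qq x * qq y) UNIV"
        by (simp add: abs_mult)
      also have "\<dots> = qq x * infsum qq UNIV" by (rule infsum_cmult_right) (use qq_summable in auto)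
      finally show ?thesis .
    qed
    have "0 \<le> infsum qq UNIV" by (rule infsum_nonneg) (use qq_pos in \<open>auto intro: less_imp_le\<close>)
    hence "(\<lambda>x. norm (qq x * infsum qq UNIV)) summable_on UNIV"
      using summable_on_cmult_left[OF qq_summable, of "infsum qq UNIV"] by (simp add: abs_mult)
    thus "(\<lambda>x. norm (infsum (\<lambda>y. norm (qq (fst (x, y)) * qq (snd (x, y)))) UNIV)) summable_on UNIV"
      by (simp only: E)
  qed
  hence "(\<lambda>p::int\<times>int. norm (qq (fst p) * qq (snd p))) summable_on UNIV" by simp
  thus ?thesis by (rule abs_summable_summable)
qed


lemma ellK_ge: fixes m :: real assumes "0 \<le> m" "m < 1" shows "pi/2 \<le> ellK m"
proof -
  have pos: "0 < 1 - m * (sin t)^2" for t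
  proof -
    have "(sin t)^2 \<le> 1" by (simp add: abs_square_le_1)
    hence "m * (sin t)^2 \<le> m" using assms(1) by (simp add: mult_left_le)
    thus ?thesis using assms(2) by linarith
  qed
  have cont: "continuous_on {0..pi/2} (\<lambda>t. 1 / sqrt (1 - m * (sin t)^2))"
  proof -
    have "sqrt (1 - m * (sin t)^2) \<noteq> 0" for t using pos[of t] by simp
    thus ?thesis by (intro continuous_intros) auto
  qed
  have ge: "1 \<le> 1 / sqrt (1 - m * (sin t)^2)" for t
  proof -
    have "1 - m * (sin t)^2 \<le> 1" using assms(1) by simp
    hence "sqrt (1 - m * (sin t)^2) \<le> 1" by simp
    moreover have "0 < sqrt (1 - m * (sin t)^2)" using pos[of t] by simp
    ultimately show ?thesis by (simp add: le_divide_eq)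
  qed
  have "integral {0..pi/2} (\<lambda>t::real. 1::real) \<le> integral {0..pi/2} (\<lambda>t. 1 / sqrt (1 - m * (sin t)^2))"
    by (rule integral_le) (use integrable_continuous_interval[OF cont] ge in auto)
  thus ?thesis unfolding ellK_def by simp
qed

lemma ellK_pos: fixes m :: real assumes "0 \<le> m" "m < 1" shows "0 < ellK m"
  using ellK_ge[OF assms] pi_gt_zero by linarith

definition latpt :: "real \<Rightarrow> real \<Rightarrow> int \<times> int \<Rightarrow> complex" where
  "latpt K K' p = of_int (fst p) * 2 * complex_of_real K + of_int (snd p) * 2 * \<i> * complex_of_real K'"

lemma latpt_Re[simp]: "Re (latpt K K' p) = 2 * of_int (fst p) * K" by (simp add: latpt_def)
lemma latpt_Im[simp]: "Im (latpt K K' p) = 2 * of_int (snd p) * K'" by (simp add: latpt_def)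

lemma latpt_cases:
  assumes "0 < K" "0 < K'"
  shows "latpt K K' p = 0 \<longleftrightarrow> p = (0,0)"
proof
  assume "latpt K K' p = 0"
  hence "Re (latpt K K' p) = 0" "Im (latpt K K' p) = 0" by auto
  thus "p = (0,0)" using assms by (cases p) auto
qed (simp add: latpt_def)

lemma latpt_inj: assumes "0 < K" "0 < K'" shows "inj (latpt K K')"
proof (rule injI)
  fix p q assume "latpt K K' p = latpt K K' q"
  hence "Re (latpt K K' p) = Re (latpt K K' q)" "Im (latpt K K' p) = Im (latpt K K' q)" by auto
  thus "p = q" using assms by (cases p, cases q) auto
qed

lemma int_abs_le_sq: fixes a :: int shows "\<bar>a\<bar> \<le> a^2"
proof (cases "a = 0")
  case False
  hence "1 \<le> \<bar>a\<bar>" by simp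
  hence "\<bar>a\<bar> * 1 \<le> \<bar>a\<bar> * \<bar>a\<bar>" by (intro mult_left_mono) auto
  thus ?thesis by (simp add: power2_eq_square abs_mult[symmetric])
qed simp

lemma lin7: fixes A B X Y P Q :: real
  assumes "P = 1 + A + B + Q" "1 \<le> X + Y" "A \<le> X" "B \<le> Y" "Q \<le> (X+Y)/2"
  shows "P \<le> 7/2 * (X + Y)"
  using assms by (simp add: field_simps)

lemma P_bound: fixes a b :: int assumes "(a, b) \<noteq> (0, 0)"
  shows "(1 + \<bar>real_of_int a\<bar>) * (1 + \<bar>real_of_int b\<bar>) \<le> 7/2 * (real_of_int a^2 + real_of_int b^2)"
proof -
  have "1 \<le> a^2 + b^2"
  proof -
    have ab: "a \<noteq> 0 \<or> b \<noteq> 0" using assms by auto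
    have "a \<noteq> 0 \<Longrightarrow> 1 \<le> a^2" using int_abs_le_sq[of a] by (metis abs_ge_zero dual_order.trans int_one_le_iff_zero_less zero_less_abs_iff)
    moreover have "b \<noteq> 0 \<Longrightarrow> 1 \<le> b^2" using int_abs_le_sq[of b] by (metis abs_ge_zero dual_order.trans int_one_le_iff_zero_less zero_less_abs_iff)
    moreover have "0 \<le> a^2" "0 \<le> b^2" by auto
    ultimately show ?thesis using ab by linarith
  qed
  hence s1: "1 \<le> real_of_int a^2 + real_of_int b^2" by (metis of_int_add of_int_le_iff of_int_1 of_int_power)
  have s2: "\<bar>real_of_int a\<bar> \<le> real_of_int a^2" using int_abs_le_sq[of a] by (metis of_int_abs of_int_le_iff of_int_power)
  have s3: "\<bar>real_of_int b\<bar> \<le> real_of_int b^2" using int_abs_le_sq[of b] by (metis of_int_abs of_int_le_iff of_int_power)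
  have s4: "\<bar>real_of_int a\<bar> * \<bar>real_of_int b\<bar> \<le> (real_of_int a^2 + real_of_int b^2)/2"
    using sum_squares_bound[of "\<bar>real_of_int a\<bar>" "\<bar>real_of_int b\<bar>"] by (simp add: power2_eq_square)
  have "(1 + \<bar>real_of_int a\<bar>) * (1 + \<bar>real_of_int b\<bar>) = 1 + \<bar>real_of_int a\<bar> + \<bar>real_of_int b\<bar> + \<bar>real_of_int a\<bar> * \<bar>real_of_int b\<bar>"
    by (simp add: algebra_simps)
  thus ?thesis using lin7[OF _ s1 s2 s3 s4] by blast
qed


lemma cube_powr: fixes x :: real assumes "0 \<le> x" shows "x^3 = (x^2) powr (3/2)"
proof (cases "x = 0")
  case False
  hence xp: "0 < x" using assms by simp
  have "(x^2) powr (3/2) = (x powr 2) powr (3/2)" using powr_realpow[OF xp, of 2] by simp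
  also have "\<dots> = x powr 3" by (simp add: powr_powr)
  also have "\<dots> = x^3" using powr_realpow[OF xp, of 3] by simp
  finally show ?thesis by simp
qed simp

lemma latpt_bound:
  assumes K: "0 < K" "0 < K'" and p: "p \<noteq> (0,0)"
  shows "1 / cmod (latpt K K' p) ^ 3 \<le> (1 / ((8/7) * (min K K')^2) powr (3/2)) * (qq (fst p) * qq (snd p))"
proof -
  define a where "a = real_of_int (fst p)"
  define b where "b = real_of_int (snd p)"
  define \<mu> where "\<mu> = min K K'"
  have mu: "0 < \<mu>" "\<mu> \<le> K" "\<mu> \<le> K'" unfolding \<mu>_def using K by auto
  define P where "P = (1 + \<bar>a\<bar>) * (1 + \<bar>b\<bar>)"
  have P: "P \<le> 7/2 * (a^2 + b^2)" unfolding P_def a_def b_def using P_bound[of "fst p" "snd p"] p by (cases p) auto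
  have P0: "0 \<le> P" unfolding P_def by simp
  define c where "c = cmod (latpt K K' p)"
  have c0: "0 \<le> c" unfolding c_def by simp
  have c2: "c^2 = (2*a*K)^2 + (2*b*K')^2" unfolding c_def a_def b_def by (simp add: cmod_power2)
  have m1: "\<mu>^2 \<le> K^2" "\<mu>^2 \<le> K'^2" using mu by (auto intro: power_mono)
  have "\<mu>^2 * a^2 \<le> K^2 * a^2" by (rule mult_right_mono[OF m1(1)]) simp
  moreover have "\<mu>^2 * b^2 \<le> K'^2 * b^2" by (rule mult_right_mono[OF m1(2)]) simp
  ultimately have "4 * \<mu>^2 * a^2 \<le> (2*a*K)^2" "4 * \<mu>^2 * b^2 \<le> (2*b*K')^2"
    by (simp_all add: power_mult_distrib mult_ac)
  hence "4 * \<mu>^2 * (a^2 + b^2) \<le> c^2" unfolding c2 by (simp add: algebra_simps)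
  moreover have "(8/7) * \<mu>^2 * P \<le> 4 * \<mu>^2 * (a^2 + b^2)"
  proof -
    have "(8/7) * \<mu>^2 * P \<le> (8/7) * \<mu>^2 * (7/2 * (a^2 + b^2))" by (rule mult_left_mono[OF P]) simp
    also have "\<dots> = 4 * \<mu>^2 * (a^2 + b^2)" by simp
    finally show ?thesis .
  qed
  ultimately have cb: "(8/7) * \<mu>^2 * P \<le> c^2" by linarith
  have "((8/7) * \<mu>^2 * P) powr (3/2) \<le> (c^2) powr (3/2)"
    by (rule powr_mono2) (use cb P0 in auto)
  also have "\<dots> = c^3" using cube_powr[OF c0] by simp
  finally have le0: "((8/7) * \<mu>^2 * P) powr (3/2) \<le> c^3" .
  have e1: "((8/7) * \<mu>^2 * P) powr (3/2) = ((8/7) * \<mu>^2) powr (3/2) * P powr (3/2)"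
    by (rule powr_mult)
  have e2: "P powr (3/2) = (1 + \<bar>a\<bar>) powr (3/2) * (1 + \<bar>b\<bar>) powr (3/2)"
    unfolding P_def by (rule powr_mult)
  have le: "((8/7) * \<mu>^2) powr (3/2) * ((1 + \<bar>a\<bar>) powr (3/2) * (1 + \<bar>b\<bar>) powr (3/2)) \<le> c^3"
    using le0 unfolding e1 e2 .
  have pos: "0 < ((8/7) * \<mu>^2) powr (3/2) * ((1 + \<bar>a\<bar>) powr (3/2) * (1 + \<bar>b\<bar>) powr (3/2))"
    using mu by (simp add: add_pos_nonneg)
  have "1 / c^3 \<le> 1 / (((8/7) * \<mu>^2) powr (3/2) * ((1 + \<bar>a\<bar>) powr (3/2) * (1 + \<bar>b\<bar>) powr (3/2)))"
  proof (rule divide_left_mono[OF le])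
    have "0 < c^3" using le pos by linarith
    thus "0 < c ^ 3 * (((8/7) * \<mu>^2) powr (3/2) * ((1 + \<bar>a\<bar>) powr (3/2) * (1 + \<bar>b\<bar>) powr (3/2)))"
      using pos by (rule mult_pos_pos)
  qed simp
  also have "\<dots> = (1 / ((8/7) * \<mu>^2) powr (3/2)) * (qq (fst p) * qq (snd p))"
    unfolding qq_def a_def b_def by simp
  finally show ?thesis unfolding c_def \<mu>_def .
qed


lemma latpt_img: assumes "0 < K" "0 < K'"
  shows "range (latpt K K') - {0} = latpt K K' ` (UNIV - {(0,0)})"
  using latpt_cases[OF assms] by auto

lemma int_abs_ge1: "(a::int) \<noteq> 0 \<Longrightarrow> 1 \<le> \<bar>real_of_int a\<bar>" by linarith

lemma lat2: assumes K: "0 < K" "0 < K'" shows "lat (range (latpt K K') - {0}) (2 * min K K')"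
proof
  fix w assume "w \<in> range (latpt K K') - {0}"
  then obtain p where p: "w = latpt K K' p" "w \<noteq> 0" by auto
  have "-w = latpt K K' (- fst p, - snd p)" unfolding p by (simp add: latpt_def algebra_simps)
  thus "-w \<in> range (latpt K K') - {0}" using p by auto
  have "cnj w = latpt K K' (fst p, - snd p)" unfolding p by (simp add: latpt_def)
  thus "cnj w \<in> range (latpt K K') - {0}" using p by (auto simp: complex_cnj_zero_iff)
  have pn: "p \<noteq> (0,0)" using p latpt_cases[OF K] by auto
  show "2 * min K K' \<le> cmod w"
  proof (cases "fst p = 0")
    case False
    have "2 * min K K' \<le> 2 * K" by simp
    also have "\<dots> \<le> 2 * (\<bar>real_of_int (fst p)\<bar> * K)"
      using int_abs_ge1[OF False] K mult_right_mono[of 1 "\<bar>real_of_int (fst p)\<bar>" K] by simp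
    also have "\<dots> = \<bar>Re w\<bar>" unfolding p using K by (simp add: abs_mult)
    also have "\<dots> \<le> cmod w" by (rule abs_Re_le_cmod)
    finally show ?thesis .
  next
    case True
    hence False: "snd p \<noteq> 0" using pn by (cases p) auto
    have "2 * min K K' \<le> 2 * K'" by simp
    also have "\<dots> \<le> 2 * (\<bar>real_of_int (snd p)\<bar> * K')"
      using int_abs_ge1[OF False] K mult_right_mono[of 1 "\<bar>real_of_int (snd p)\<bar>" K'] by simp
    also have "\<dots> = \<bar>Im w\<bar>" unfolding p using K by (simp add: abs_mult)
    also have "\<dots> \<le> cmod w" by (rule abs_Im_le_cmod)
    finally show ?thesis .
  qed
next
  show "0 < 2 * min K K'" using K by simp
next
  define c where "c = 1 / ((8/7) * (min K K')^2) powr (3/2)"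
  have "(\<lambda>p. 1 / cmod (latpt K K' p) ^ 3) summable_on (UNIV - {(0,0)})"
  proof (rule summable_on_comparison_test)
    show "(\<lambda>p. c * (qq (fst p) * qq (snd p))) summable_on (UNIV - {(0,0)})"
      by (rule summable_on_subset[OF summable_on_cmult_right[OF qq2_summable]]) auto
    show "1 / cmod (latpt K K' p) ^ 3 \<le> c * (qq (fst p) * qq (snd p))" if "p \<in> UNIV - {(0,0)}" for p
      unfolding c_def by (rule latpt_bound) (use K that in auto)
  qed simp
  hence "(\<lambda>w. 1 / cmod w ^ 3) summable_on (latpt K K' ` (UNIV - {(0,0)}))"
    by (subst summable_on_reindex) (auto simp: o_def intro: inj_on_subset[OF latpt_inj[OF K]])
  thus "(\<lambda>w. 1 / cmod w ^ 3) summable_on (range (latpt K K') - {0})" by (simp add: latpt_img[OF K])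
qed


definition latpt0 :: "real \<Rightarrow> int \<Rightarrow> complex" where
  "latpt0 K a = of_int a * 2 * complex_of_real K"

lemma latpt0_norm: "0 < K \<Longrightarrow> cmod (latpt0 K a) = 2 * \<bar>real_of_int a\<bar> * K"
  unfolding latpt0_def by (simp add: norm_mult)

lemma latpt0_img: assumes "0 < K" shows "range (latpt0 K) - {0} = latpt0 K ` (UNIV - {0})"
  using assms by (auto simp: latpt0_def)

lemma latpt0_S2: assumes K: "0 < K" shows "(\<lambda>w. 1 / cmod w ^ 2) summable_on (range (latpt0 K) - {0})"
proof -
  have "(\<lambda>a. 1 / cmod (latpt0 K a) ^ 2) summable_on (UNIV - {0})"
  proof (rule summable_on_comparison_test)
    show "(\<lambda>a. (1/K^2) * qq a) summable_on (UNIV - {0})"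
      by (rule summable_on_subset[OF summable_on_cmult_right[OF qq_summable]]) auto
    show "1 / cmod (latpt0 K a) ^ 2 \<le> (1/K^2) * qq a" if "a \<in> UNIV - {0}" for a
    proof -
      define x where "x = \<bar>real_of_int a\<bar>"
      have x1: "1 \<le> x" unfolding x_def using that by auto
      have "(1 + x) powr (3/2) \<le> (1 + x) powr 2" by (rule powr_mono) (use x1 in auto)
      also have "\<dots> = (1 + x)^2" using powr_realpow[of "1 + x" 2] x1 by simp
      also have "\<dots> \<le> (2 * x)^2" using x1 by (intro power_mono) auto
      finally have le: "(1 + x) powr (3/2) \<le> (2 * x)^2" .
      have pos: "0 < (1 + x) powr (3/2)" using x1 by simp
      have "1 / cmod (latpt0 K a) ^ 2 = (1/K^2) * (1 / (2 * x)^2)"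
        unfolding latpt0_norm[OF K] x_def by (simp add: power_mult_distrib)
      also have "\<dots> \<le> (1/K^2) * (1 / (1 + x) powr (3/2))"
      proof (rule mult_left_mono)
        show "1 / (2 * x)^2 \<le> 1 / (1 + x) powr (3/2)" by (rule divide_left_mono[OF le]) (use pos x1 in auto)
      qed simp
      also have "\<dots> = (1/K^2) * qq a" unfolding qq_def x_def by simp
      finally show ?thesis .
    qed
  qed simp
  hence "(\<lambda>w. 1 / cmod w ^ 2) summable_on (latpt0 K ` (UNIV - {0}))"
    by (subst summable_on_reindex) (use K in \<open>auto simp: o_def inj_on_def latpt0_def\<close>)
  thus ?thesis by (simp add: latpt0_img[OF K])
qed

lemma lat1: assumes K: "0 < K" shows "lat (range (latpt0 K) - {0}) (2 * K)"
proof
  fix w assume "w \<in> range (latpt0 K) - {0}"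
  then obtain a where p: "w = latpt0 K a" "w \<noteq> 0" by auto
  have "-w = latpt0 K (- a)" unfolding p by (simp add: latpt0_def)
  thus "-w \<in> range (latpt0 K) - {0}" using p by auto
  have "cnj w = latpt0 K a" unfolding p by (simp add: latpt0_def)
  thus "cnj w \<in> range (latpt0 K) - {0}" using p by auto
  have "a \<noteq> 0" using p by (auto simp: latpt0_def)
  hence "1 \<le> \<bar>real_of_int a\<bar>" by (rule int_abs_ge1)
  thus "2 * K \<le> cmod w" unfolding p latpt0_norm[OF K] using K mult_right_mono[of 1 "\<bar>real_of_int a\<bar>" K] by simp
next
  show "0 < 2 * K" using K by simp
next
  show "(\<lambda>w. 1 / cmod w ^ 3) summable_on (range (latpt0 K) - {0})"
  proof (rule summable_on_comparison_test)
    show "(\<lambda>w. (1/(2*K)) * (1 / cmod w ^ 2)) summable_on (range (latpt0 K) - {0})"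
      by (rule summable_on_cmult_right[OF latpt0_S2[OF K]])
    fix w assume w: "w \<in> range (latpt0 K) - {0}"
    then obtain a where p: "w = latpt0 K a" "w \<noteq> 0" by auto
    have "a \<noteq> 0" using p by (auto simp: latpt0_def)
    hence "1 \<le> \<bar>real_of_int a\<bar>" by (rule int_abs_ge1)
    hence wK: "2 * K \<le> cmod w" unfolding p latpt0_norm[OF K] using K mult_right_mono[of 1 "\<bar>real_of_int a\<bar>" K] by simp
    have wp: "0 < cmod w" using wK K by linarith
    have "1 / cmod w ^ 3 = (1 / cmod w) * (1 / cmod w ^ 2)" by (simp add: power3_eq_cube power2_eq_square)
    also have "\<dots> \<le> (1/(2*K)) * (1 / cmod w ^ 2)"
    proof (rule mult_right_mono)
      show "1 / cmod w \<le> 1 / (2 * K)" by (rule divide_left_mono[OF wK]) (use K wp in auto)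
    qed simp
    finally show "1 / cmod w ^ 3 \<le> (1/(2*K)) * (1 / cmod w ^ 2)" .
  qed simp
qed


context lat begin

lemma hh_far:
  assumes c: "0 < c" and d: "\<And>w. w \<in> L \<Longrightarrow> c * cmod w \<le> cmod (z - w)" and B: "cmod z \<le> Bd"
  shows "cmod (hh z) \<le> (Bd * (2 + Bd/\<rho>) / c^2) * S3"
  unfolding hh_def
proof (rule maj(2))
  fix w assume w: "w \<in> L"
  have wr: "\<rho> \<le> cmod w" by (rule rho_le[OF w])
  have wp: "0 < cmod w" using wr rho_pos by linarith
  have w0: "w \<noteq> 0" using wp by auto
  have dz: "c * cmod w \<le> cmod (z - w)" by (rule d[OF w])
  have cw: "0 < c * cmod w" using c wp by simp
  have zw: "z \<noteq> w" using dz cw by auto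
  have Bd0: "0 \<le> Bd" using B norm_ge_zero order_trans by blast
  have n1: "cmod (2*w - z) \<le> 2 * cmod w + Bd"
    using norm_triangle_ineq4[of "2*w" z] B by (simp add: norm_mult)
  have n2: "2 * cmod w + Bd \<le> cmod w * (2 + Bd/\<rho>)"
  proof -
    have "Bd * 1 \<le> Bd * (cmod w / \<rho>)" using wr rho_pos Bd0 by (intro mult_left_mono) (auto simp: le_divide_eq)
    thus ?thesis by (simp add: algebra_simps)
  qed
  have num: "cmod z * cmod (2*w - z) \<le> Bd * (cmod w * (2 + Bd/\<rho>))"
    by (rule mult_mono[OF B order_trans[OF n1 n2]]) (use Bd0 in auto)
  have den: "cmod w^2 * (c * cmod w)^2 \<le> cmod w^2 * cmod (z-w)^2"
    by (rule mult_left_mono[OF power_mono[OF dz]]) (use cw in auto)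
  have "cmod (Tf z w) = cmod z * cmod (2*w - z) / (cmod w^2 * cmod (z-w)^2)"
    unfolding Tf_def T_eq[OF w0 zw] by (simp add: norm_mult norm_divide norm_power)
  also have "\<dots> \<le> Bd * (cmod w * (2 + Bd/\<rho>)) / (cmod w^2 * (c * cmod w)^2)"
    by (rule frac_le[OF _ num _ den]) (use Bd0 wp c rho_pos in auto)
  also have "\<dots> = (Bd * (2 + Bd/\<rho>) / c^2) / cmod w ^ 3"
    using wp c by (simp add: field_simps power2_eq_square power3_eq_cube)
  finally show "cmod (Tf z w) \<le> (Bd * (2 + Bd/\<rho>) / c^2) / cmod w ^ 3" .
qed

lemma hh_far0:
  assumes S2: "(\<lambda>w. 1 / cmod w ^ 2) summable_on L"
    and d: "\<And>w. w \<in> L \<Longrightarrow> cmod w / 2 \<le> cmod (z - w)"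
  shows "cmod (hh z) \<le> 5 * infsum (\<lambda>w. 1 / cmod w ^ 2) L"
proof -
  have b: "cmod (Tf z w) \<le> 5 * (1 / cmod w ^ 2)" if w: "w \<in> L" for w
  proof -
    have wp: "0 < cmod w" using rho_le[OF w] rho_pos by linarith
    have dz: "cmod w / 2 \<le> cmod (z - w)" by (rule d[OF w])
    have "cmod (1/(z-w)^2) \<le> 4 / cmod w^2"
    proof -
      have "(cmod w / 2)^2 \<le> cmod (z - w)^2" by (rule power_mono[OF dz]) (use wp in auto)
      moreover have "0 < cmod (z - w)" using dz wp by linarith
      ultimately have "1 / cmod (z-w)^2 \<le> 1 / (cmod w / 2)^2" by (intro divide_left_mono) (use wp in auto)
      thus ?thesis by (simp add: norm_divide norm_power power_divide)
    qed
    moreover have "cmod (Tf z w) \<le> cmod (1/(z-w)^2) + cmod (1/w^2)"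
      unfolding Tf_def by (rule norm_triangle_ineq4)
    ultimately show ?thesis by (simp add: norm_divide norm_power)
  qed
  have g: "(\<lambda>w. 5 * (1 / cmod w ^ 2)) summable_on L" by (rule summable_on_cmult_right[OF S2])
  have "(\<lambda>w. norm (Tf z w)) summable_on L"
    by (rule summable_on_comparison_test[OF g]) (use b in auto)
  hence fs: "Tf z summable_on L" by (rule abs_summable_summable)
  have "cmod (hh z) \<le> infsum (\<lambda>w. 5 * (1 / cmod w ^ 2)) L"
    unfolding hh_def by (rule norm_infsum_le[OF has_sum_infsum[OF fs] has_sum_infsum[OF g]]) (use b in auto)
  also have "\<dots> = 5 * infsum (\<lambda>w. 1 / cmod w ^ 2) L" by (rule infsum_cmult_right) (use S2 in auto)
  finally show ?thesis .
qed

end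

lemma cbound:
  fixes u v \<mu> Bd :: real
  assumes "0 < \<mu>" "0 \<le> Bd" "\<mu> \<le> v" "u - Bd \<le> v" "0 \<le> u"
  shows "\<mu> / (Bd + \<mu>) * u \<le> v"
proof -
  have p: "0 < Bd + \<mu>" using assms by simp
  have "\<mu> * u \<le> v * (Bd + \<mu>)"
  proof (cases "u \<le> Bd + \<mu>")
    case True
    have "\<mu> * u \<le> \<mu> * (Bd + \<mu>)" by (rule mult_left_mono[OF True]) (use assms in auto)
    also have "\<dots> \<le> v * (Bd + \<mu>)" by (rule mult_right_mono) (use assms p in auto)
    finally show ?thesis .
  next
    case False
    have "\<mu> * u \<le> (u - Bd) * (Bd + \<mu>)"
    proof -
      have "0 \<le> Bd * (u - Bd - \<mu>)" using False assms by simp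
      thus ?thesis by (simp add: algebra_simps)
    qed
    also have "\<dots> \<le> v * (Bd + \<mu>)" by (rule mult_right_mono) (use assms p in auto)
    finally show ?thesis .
  qed
  thus ?thesis using p by (simp add: divide_le_eq field_simps)
qed


lemma ell_lattice_pos: "m \<noteq> 0 \<Longrightarrow> ell_lattice m = range (latpt (ellK m) (ellK (1-m)))"
  unfolding ell_lattice_def latpt_def by (auto simp: image_iff) (metis fst_conv snd_conv)

lemma ell_lattice_zero: "ell_lattice 0 = range (latpt0 (ellK 0))"
  unfolding ell_lattice_def latpt0_def by auto

lemma strip:
  fixes x K :: real and a :: int
  assumes "0 \<le> x" "x \<le> K" "0 < K" "a \<noteq> 0"
  shows "\<bar>real_of_int a\<bar> * K \<le> \<bar>x - 2 * real_of_int a * K\<bar>" and "K \<le> \<bar>real_of_int a\<bar> * K"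
proof -
  have "1 \<le> \<bar>real_of_int a\<bar>" using assms(4) by (rule int_abs_ge1)
  thus K: "K \<le> \<bar>real_of_int a\<bar> * K" using mult_right_mono[of 1 "\<bar>real_of_int a\<bar>" K] assms by simp
  define P where "P = real_of_int a * K"
  have e: "2 * real_of_int a * K = 2 * P" unfolding P_def by simp
  have a1: "2 * P - x \<le> \<bar>x - 2 * P\<bar>" "x - 2 * P \<le> \<bar>x - 2 * P\<bar>" by linarith+
  show "\<bar>real_of_int a\<bar> * K \<le> \<bar>x - 2 * real_of_int a * K\<bar>"
  proof (cases "0 < a")
    case True
    hence "\<bar>real_of_int a\<bar> * K = P" unfolding P_def by simp
    thus ?thesis unfolding e using K a1 assms(1,2) by linarith
  next
    case False
    hence "\<bar>real_of_int a\<bar> * K = - P" unfolding P_def by simp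
    thus ?thesis unfolding e using K a1 assms(1,2) by linarith
  qed
qed

lemma branch_ReIm:
  assumes "z \<in> a_branch m" "0 \<le> ellK m" "m \<noteq> 0 \<Longrightarrow> 0 \<le> ellK (1 - m)"
  shows "0 \<le> Re z" "Re z \<le> ellK m" "0 \<le> Im z" "m \<noteq> 0 \<Longrightarrow> Im z \<le> ellK (1 - m)"
  using assms unfolding a_branch_def im_range_def by auto

lemma scale_eq: fixes c :: real and X :: complex assumes "c \<noteq> 0"
  shows "complex_of_real (6 * pi^2) * (complex_of_real (c / (6 * pi^2)) * X) / complex_of_real c = X"
proof -
  have "6 * pi^2 * (c / (6 * pi^2)) = c" by simp
  hence "complex_of_real (6 * pi^2) * complex_of_real (c / (6 * pi^2)) = complex_of_real c"
    by (metis of_real_mult)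
  hence "complex_of_real (6 * pi^2) * (complex_of_real (c / (6 * pi^2)) * X) = complex_of_real c * X"
    by (simp add: mult.assoc[symmetric])
  thus ?thesis using assms by simp
qed


lemma key:
  fixes m :: real
  assumes "0 \<le> m" "m < 1"
  defines "Kc \<equiv> complex_of_real (ellK m)"
  shows "\<exists>C R. R > 0 \<and> (\<forall>V::real. R \<le> \<bar>V\<bar> \<longrightarrow>
     cmod ((Kc * wzeta m (THE a. a \<in> a_branch m \<and> wp m a = complex_of_real V) - wzeta m Kc * (THE a. a \<in> a_branch m \<and> wp m a = complex_of_real V))^2
            - (Kc^2 * complex_of_real V - 2*Kc*wzeta m Kc)) \<le> C / \<bar>V\<bar>)"
proof -
  define K where "K = ellK m"
  have Kp: "0 < K" unfolding K_def using ellK_pos assms by blast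
  have Kc: "Kc = complex_of_real K" unfolding Kc_def K_def ..
  show ?thesis
  proof (cases "m = 0")
    case True
    define L where "L = range (latpt0 K) - {0}"
    interpret lat L "2 * K" unfolding L_def by (rule lat1[OF Kp])
    have Ldef: "ell_lattice m - {0} = L" unfolding L_def K_def True ell_lattice_zero ..
    have wpe: "wp m = wpL" by (rule ext) (simp add: wp_def wpL_def hh_def Tf_def[abs_def] Ldef)
    have ze: "wzeta m = zL" by (rule ext) (simp add: wzeta_def zL_def gg_def Zf_def[abs_def] Ldef)
    have RI: "0 \<le> Re z" "Re z \<le> K" if "z \<in> a_branch m" for z
      using branch_ReIm[of z m] that Kp True unfolding K_def by auto
    have "\<exists>C R. R > 0 \<and> (\<forall>V::real. R \<le> \<bar>V\<bar> \<longrightarrow>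
       cmod ((Kc * zL (THE a. a \<in> a_branch m \<and> wpL a = complex_of_real V) - zL Kc * (THE a. a \<in> a_branch m \<and> wpL a = complex_of_real V))^2
              - (Kc^2 * complex_of_real V - 2*Kc*zL Kc)) \<le> C / \<bar>V\<bar>)"
    proof (rule asym[where ?r0.0 = K])
      show "0 < K" by (rule Kp)
      show "complex_of_real t \<in> a_branch m" if "0 < t" "t \<le> K" for t
        using that unfolding a_branch_def K_def by auto
      show "\<i> * complex_of_real t \<in> a_branch m" if "0 < t" "t \<le> K" for t
        using that True unfolding a_branch_def im_range_def by auto
      show "\<exists>t>0. z = complex_of_real t \<or> z = \<i> * complex_of_real t" if "z \<in> a_branch m" "cmod z < K" for z
      proof -
        have "\<not> (\<exists>t. z = complex_of_real (ellK m) + \<i> * complex_of_real t)"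
        proof
          assume "\<exists>t. z = complex_of_real (ellK m) + \<i> * complex_of_real t"
          hence "Re z = K" unfolding K_def by auto
          thus False using that(2) abs_Re_le_cmod[of z] Kp by linarith
        qed
        thus ?thesis using that(1) unfolding a_branch_def by auto
      qed
      show "\<exists>M. \<forall>z\<in>a_branch m. r \<le> cmod z \<longrightarrow> cmod (hh z) \<le> M" if "0 < r" for r
      proof (intro exI ballI impI)
        fix z assume z: "z \<in> a_branch m"
        show "cmod (hh z) \<le> 5 * infsum (\<lambda>w. 1 / cmod w ^ 2) L"
        proof (rule hh_far0)
          show "(\<lambda>w. 1 / cmod w ^ 2) summable_on L" unfolding L_def by (rule latpt0_S2[OF Kp])
          fix w assume "w \<in> L"
          then obtain a where w: "w = latpt0 K a" "a \<noteq> 0" unfolding L_def latpt0_def by auto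
          have "cmod w / 2 = \<bar>real_of_int a\<bar> * K" unfolding w latpt0_norm[OF Kp] by simp
          also have "\<dots> \<le> \<bar>Re z - 2 * real_of_int a * K\<bar>" by (rule strip(1)) (use RI[OF z] Kp w in auto)
          also have "\<dots> = \<bar>Re (z - w)\<bar>" unfolding w latpt0_def by simp
          also have "\<dots> \<le> cmod (z - w)" by (rule abs_Re_le_cmod)
          finally show "cmod w / 2 \<le> cmod (z - w)" .
        qed
      qed
    qed
    thus ?thesis unfolding wpe ze .
  next
    case False
    hence mp: "0 < m" using assms by simp
    define K' where "K' = ellK (1 - m)"
    have K'p: "0 < K'" unfolding K'_def using ellK_pos mp assms by simp
    define L where "L = range (latpt K K') - {0}"
    interpret lat L "2 * min K K'" unfolding L_def by (rule lat2[OF Kp K'p])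
    have Ldef: "ell_lattice m - {0} = L" unfolding L_def K_def K'_def ell_lattice_pos[OF False] ..
    have wpe: "wp m = wpL" by (rule ext) (simp add: wp_def wpL_def hh_def Tf_def[abs_def] Ldef)
    have ze: "wzeta m = zL" by (rule ext) (simp add: wzeta_def zL_def gg_def Zf_def[abs_def] Ldef)
    have RI: "0 \<le> Re z" "Re z \<le> K" "0 \<le> Im z" "Im z \<le> K'" if "z \<in> a_branch m" for z
      using branch_ReIm[of z m] that Kp K'p False unfolding K_def K'_def by auto
    define \<mu> where "\<mu> = min K K'"
    have mu: "0 < \<mu>" "\<mu> \<le> K" "\<mu> \<le> K'" unfolding \<mu>_def using Kp K'p by auto
    have "\<exists>C R. R > 0 \<and> (\<forall>V::real. R \<le> \<bar>V\<bar> \<longrightarrow>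
       cmod ((Kc * zL (THE a. a \<in> a_branch m \<and> wpL a = complex_of_real V) - zL Kc * (THE a. a \<in> a_branch m \<and> wpL a = complex_of_real V))^2
              - (Kc^2 * complex_of_real V - 2*Kc*zL Kc)) \<le> C / \<bar>V\<bar>)"
    proof (rule asym[where ?r0.0 = \<mu>])
      show "0 < \<mu>" by (rule mu)
      show "complex_of_real t \<in> a_branch m" if "0 < t" "t \<le> \<mu>" for t
        using that mu unfolding a_branch_def K_def by auto
      show "\<i> * complex_of_real t \<in> a_branch m" if "0 < t" "t \<le> \<mu>" for t
        using that mu unfolding a_branch_def im_range_def K'_def by auto
      show "\<exists>t>0. z = complex_of_real t \<or> z = \<i> * complex_of_real t" if "z \<in> a_branch m" "cmod z < \<mu>" for z
      proof -
        have "\<not> (\<exists>t. z = complex_of_real (ellK m) + \<i> * complex_of_real t)"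
        proof
          assume "\<exists>t. z = complex_of_real (ellK m) + \<i> * complex_of_real t"
          hence "Re z = K" unfolding K_def by auto
          thus False using that(2) abs_Re_le_cmod[of z] mu by linarith
        qed
        thus ?thesis using that(1) unfolding a_branch_def by auto
      qed
      show "\<exists>M. \<forall>z\<in>a_branch m. r \<le> cmod z \<longrightarrow> cmod (hh z) \<le> M" if "0 < r" for r
      proof (intro exI ballI impI)
        fix z assume z: "z \<in> a_branch m"
        define Bd where "Bd = K + K'"
        have Bd0: "0 \<le> Bd" unfolding Bd_def using Kp K'p by simp
        have zB: "cmod z \<le> Bd"
        proof -
          have "cmod z \<le> \<bar>Re z\<bar> + \<bar>Im z\<bar>" by (rule cmod_le)
          thus ?thesis unfolding Bd_def using RI[OF z] by simp
        qed
        show "cmod (hh z) \<le> (Bd * (2 + Bd/(2 * min K K')) / (\<mu> / (Bd + \<mu>))^2) * S3"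
        proof (rule hh_far[OF _ _ zB])
          show "0 < \<mu> / (Bd + \<mu>)" using mu Bd0 by simp
          fix w assume "w \<in> L"
          then obtain p where w: "w = latpt K K' p" "p \<noteq> (0,0)" unfolding L_def using latpt_cases[OF Kp K'p] by auto
          have v1: "\<mu> \<le> cmod (z - w)"
          proof (cases "fst p = 0")
            case False
            have "\<mu> \<le> K" by (rule mu)
            also have "\<dots> \<le> \<bar>real_of_int (fst p)\<bar> * K" by (rule strip(2)[of 0 K]) (use Kp False in auto)
            also have "\<dots> \<le> \<bar>Re z - 2 * real_of_int (fst p) * K\<bar>" by (rule strip(1)) (use RI[OF z] Kp False in auto)
            also have "\<dots> = \<bar>Re (z - w)\<bar>" unfolding w by simp
            also have "\<dots> \<le> cmod (z - w)" by (rule abs_Re_le_cmod)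
            finally show ?thesis .
          next
            case True
            hence F: "snd p \<noteq> 0" using w(2) by (cases p) auto
            have "\<mu> \<le> K'" by (rule mu)
            also have "\<dots> \<le> \<bar>real_of_int (snd p)\<bar> * K'" by (rule strip(2)[of 0 K']) (use K'p F in auto)
            also have "\<dots> \<le> \<bar>Im z - 2 * real_of_int (snd p) * K'\<bar>" by (rule strip(1)) (use RI[OF z] K'p F in auto)
            also have "\<dots> = \<bar>Im (z - w)\<bar>" unfolding w by simp
            also have "\<dots> \<le> cmod (z - w)" by (rule abs_Im_le_cmod)
            finally show ?thesis .
          qed
          have v2: "cmod w - Bd \<le> cmod (z - w)"
            using norm_triangle_ineq2[of w z] zB by (simp add: norm_minus_commute)
          show "\<mu> / (Bd + \<mu>) * cmod w \<le> cmod (z - w)"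
            by (rule cbound[OF mu(1) Bd0 v1 v2]) simp
        qed
      qed
    qed
    thus ?thesis unfolding wpe ze .
  qed
qed

theorem mainTheorem3:
  fixes c m :: real
  assumes "c \<noteq> 0" and "0 \<le> m" and "m < 1"
  shows "\<exists>C R. R > 0 \<and> (\<forall>V::real. R \<le> \<bar>V\<bar> \<longrightarrow>
           cmod (complex_of_real (6 * pi\<^sup>2) * kconst c m V / complex_of_real c
                 - (complex_of_real ((ellK m)\<^sup>2 * V)
                    - 2 * complex_of_real (ellK m) * wzeta m (complex_of_real (ellK m))))
           \<le> C / \<bar>V\<bar>)"
proof -
  obtain C R where CR: "R > 0" "\<forall>V::real. R \<le> \<bar>V\<bar> \<longrightarrow>
     cmod ((complex_of_real (ellK m) * wzeta m (THE a. a \<in> a_branch m \<and> wp m a = complex_of_real V) - wzeta m (complex_of_real (ellK m)) * (THE a. a \<in> a_branch m \<and> wp m a = complex_of_real V))^2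
            - ((complex_of_real (ellK m))^2 * complex_of_real V - 2*complex_of_real (ellK m)*wzeta m (complex_of_real (ellK m)))) \<le> C / \<bar>V\<bar>"
    using key[OF assms(2,3)] by blast
  show ?thesis
  proof (rule exI[of _ C], rule exI[of _ R], intro conjI allI impI)
    show "R > 0" by (rule CR(1))
    fix V :: real assume V: "R \<le> \<bar>V\<bar>"
    have "complex_of_real (6 * pi\<^sup>2) * kconst c m V / complex_of_real c
       = (complex_of_real (ellK m) * wzeta m (THE a. a \<in> a_branch m \<and> wp m a = complex_of_real V) - wzeta m (complex_of_real (ellK m)) * (THE a. a \<in> a_branch m \<and> wp m a = complex_of_real V))^2"
      unfolding kconst_def Let_def by (rule scale_eq[OF assms(1)])
    moreover have "complex_of_real ((ellK m)\<^sup>2 * V) = (complex_of_real (ellK m))^2 * complex_of_real V" by simp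
    ultimately show "cmod (complex_of_real (6 * pi\<^sup>2) * kconst c m V / complex_of_real c
                 - (complex_of_real ((ellK m)\<^sup>2 * V)
                    - 2 * complex_of_real (ellK m) * wzeta m (complex_of_real (ellK m))))
           \<le> C / \<bar>V\<bar>" using CR(2) V by simp
  qed
qed


end
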